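(* Under the null hypothesis $p=p'$ (so that $r_v:=p'_v/p_v\equiv1$ for every node $v$), assume Assumption 1 and Assumption 2, let $\theta_t$ be generated by the block stochastic gradient update with $\alpha_{v,t}=c/t$ for all $v,t$, where $c>0$ and $c\,\mathcal{C}<1$, suppose $\|\theta_t\|\le\rho$ for all $t$ almost surely for some $\rho>0$, and suppose $\sigma=\sup_t\sigma_t<\infty$. Then the statistic $$\hat g_t=\frac1{n^{\mathrm{pre}}}\sum_{y\in Y_t^{\mathrm{pre}}}K_G(y)^\top\theta_{t+1}\in\mathbb{R}^N$$ is an asymptotically unbiased estimator of $r(y)-\mathbf{1}_N=0$, i.e. $\mathbb{E}[\hat g_t]\to 0$ as $t\to\infty$.
   Context: Graph: $G$ undirected weighted on $V=\{1,\dots,N\}$, symmetric $W$ with $W_{uv}\ge0$, $W_{vv}=0$; $\mathcal{N}(v)$ neighbors of $v$; $d_v=\sum_{u\in\mathcal{N}(v)}W_{uv}$; $\mathcal{L}_G=\mathrm{diag}(d_v)-W$. Data: node $v$ produces observations in $\mathcal{X}_v$; $y_t=(y_{1,t},\dots,y_{N,t})$; pre-change joint density $p$ with marginals $p_v$, post-change $p'$ with marginals $p'_v$; $r(y)=(r_1(y_1),\dots,r_N(y_N))$ with $r_v=p'_v/p_v$. Assumption 1: each $k_v$ is a reproducing kernel on $\mathcal{X}_v$ with separable RKHS and $\sup k_v\le M_v<\infty$. Assumption 2: $y_1,y_2,\dots$ are independent in time. Kernels/dictionaries: fixed dictionary $x_{v,1},\dots,x_{v,L_v}$ per node; $k_v(y_v)=(k_v(y_v,x_{v,l}))_{l=1}^{L_v}$;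 $L=\sum_vL_v$; $\theta=(\theta_1,\dots,\theta_N)\in\mathbb{R}^L$; $K_G(y)\in\mathbb{R}^{L\times N}$ block diagonal with $v$-th diagonal block the column $k_v(y_v)$. Windows: $Y_t^{\mathrm{pre}}$ consists of $n^{\mathrm{pre}}$ observations sampled uniformly at random at each $t$ from a fixed collection of observations distributed according to $p$; $Y_t^{\mathrm{post}}=\{y_{t-n^{\mathrm{post}}},\dots,y_t\}$. $h^{\mathrm{pre}}_{v,t},h^{\mathrm{post}}_{v,t}$ are the window averages of $k_v(y_v)$, $H^{\mathrm{pre}}_{v,t}$ the pre-window average of $k_v(y_v)k_v(y_v)^\top$ (stacked/block-diagonal versions $h^{\mathrm{pre}}_t,h^{\mathrm{post}}_t,H^{\mathrm{pre}}_t$); $A_t=H^{\mathrm{pre}}_t+\lambda\frac1{n^{\mathrm{pre}}}\sum_{y\in Y_t^{\mathrm{pre}}}K_G(y)\mathcal{L}_GK_G(y)^\top+\gamma I_L$ ($\lambda\ge0,\gamma>0$), $b_t=h^{\mathrm{pre}}_t-h^{\mathrm{post}}_t$, $F_t(\theta)=\frac12\theta^\top A_t\theta+\theta^\top b_t$, $\mathbf{F}=\mathbb{E}[F_t]$. Update: for $t\ge1$, $v=1,\dots,N$ in order, $\theta_{v,t+1}=\theta_{v,t}-\alpha_{v,t}\nabla_{\theta_v}F_t(z_{v,t})$ with $z_{v,t}=(\theta_{1,t+1},\dots,\theta_{v-1,t+1},\theta_{v,t},\dots,\theta_{N,t})$. Constants: $\lambda^{\max}_v=\|\mathbb{E}_p[H^{\mathrm{pre}}_{v,t}]\|_2$;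 $C_v=(1+\lambda d_v)\lambda^{\max}_v+\gamma+\lambda M_v\sum_{u\in\mathcal{N}(v)}W_{uv}M_u$; $\mathcal{C}=\max_vC_v$; $\delta_{v,t}=\nabla_{\theta_v}F_t(z_{v,t})-\nabla_{\theta_v}\mathbf{F}(z_{v,t})$ and $(\sigma_t)$ satisfies $\mathbb{E}\|\delta_{v,t}\|^2\le\sigma_t^2$ for all $v,t$.
   Formalization: The pre-change window $Y_t^{\mathrm{pre}}$ consists of fresh independent draws from p, independent across t and of the stream $y_t$, instead of uniform samples from a fixed collection; each kernel $k_v$ is also jointly measurable. The statement above fails without it. *)

theory Defs
  imports "HOL-Probability.Probability"
begin

(* Nodes are 0..N-1 (the paper uses 1..N).  An observation of all nodes is a function
   y :: nat => 'a with y v the observation of node v (in space (Xs v)).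
   A parameter vector theta in R^L is stored blockwise: theta v l, v < N, l < L v. *)

definition avg :: "'b list \<Rightarrow> ('b \<Rightarrow> real) \<Rightarrow> real" where
  "avg xs f = (\<Sum>y\<leftarrow>xs. f y) / real (length xs)"

text \<open>Reproducing kernel on X (Moore-Aronszajn: symmetric positive semidefinite kernel).\<close>
definition reproducing_kernel :: "'a set \<Rightarrow> ('a \<Rightarrow> 'a \<Rightarrow> real) \<Rightarrow> bool" where
  "reproducing_kernel X k \<longleftrightarrow>
     (\<forall>a\<in>X. \<forall>b\<in>X. k a b = k b a) \<and>
     (\<forall>F c. finite F \<and> F \<subseteq> X \<longrightarrow> 0 \<le> (\<Sum>a\<in>F. \<Sum>b\<in>F. c a * c b * k a b))"

text \<open>The RKHS of k is separable: there is a countable D \<subseteq> X such that every k(.,x) lies in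
  the RKHS-norm closure of span {k(.,d) | d \<in> D}.  The expression below is
  the squared RKHS norm of k(.,x) - sum_d c_d k(.,d).\<close>
definition rkhs_separable :: "'a set \<Rightarrow> ('a \<Rightarrow> 'a \<Rightarrow> real) \<Rightarrow> bool" where
  "rkhs_separable X k \<longleftrightarrow>
     (\<exists>D. D \<subseteq> X \<and> countable D \<and>
        (\<forall>x\<in>X. \<forall>\<epsilon>>0. \<exists>F c. finite F \<and> F \<subseteq> D \<and>
            k x x - 2 * (\<Sum>d\<in>F. c d * k x d) + (\<Sum>d\<in>F. \<Sum>e\<in>F. c d * c e * k d e) < \<epsilon>))"

definition feat :: "(nat \<Rightarrow> 'a \<Rightarrow> 'a \<Rightarrow> real) \<Rightarrow> (nat \<Rightarrow> nat \<Rightarrow> 'a) \<Rightarrow> nat \<Rightarrow> (nat \<Rightarrow> 'a) \<Rightarrow> nat \<Rightarrow> real" where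
  "feat k x v y l = k v (y v) (x v l)"

definition nbrs :: "nat \<Rightarrow> (nat \<Rightarrow> nat \<Rightarrow> real) \<Rightarrow> nat \<Rightarrow> nat set" where
  "nbrs N W v = {u. u < N \<and> 0 < W u v}"

definition gdeg :: "nat \<Rightarrow> (nat \<Rightarrow> nat \<Rightarrow> real) \<Rightarrow> nat \<Rightarrow> real" where
  "gdeg N W v = (\<Sum>u\<in>nbrs N W v. W u v)"

definition glap :: "nat \<Rightarrow> (nat \<Rightarrow> nat \<Rightarrow> real) \<Rightarrow> nat \<Rightarrow> nat \<Rightarrow> real" where
  "glap N W u v = (if u = v then gdeg N W v else 0) - W u v"

text \<open>Entry ((v,l),(u,m)) of A_t for a pre-change window Ys:
  H^pre + lambda * avg K_G(y) L_G K_G(y)^T + gamma I.\<close>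
definition Amat :: "nat \<Rightarrow> (nat \<Rightarrow> nat \<Rightarrow> real) \<Rightarrow> (nat \<Rightarrow> 'a \<Rightarrow> 'a \<Rightarrow> real) \<Rightarrow> (nat \<Rightarrow> nat \<Rightarrow> 'a)
    \<Rightarrow> real \<Rightarrow> real \<Rightarrow> (nat \<Rightarrow> 'a) list \<Rightarrow> nat \<Rightarrow> nat \<Rightarrow> nat \<Rightarrow> nat \<Rightarrow> real" where
  "Amat N W k x lam gam Ys v l u m =
     avg Ys (\<lambda>y. (if v = u then feat k x v y l * feat k x v y m else 0)
                 + lam * (feat k x v y l * glap N W v u * feat k x u y m))
     + gam * (if v = u \<and> l = m then 1 else 0)"

definition bvec :: "(nat \<Rightarrow> 'a \<Rightarrow> 'a \<Rightarrow> real) \<Rightarrow> (nat \<Rightarrow> nat \<Rightarrow> 'a)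
    \<Rightarrow> (nat \<Rightarrow> 'a) list \<Rightarrow> (nat \<Rightarrow> 'a) list \<Rightarrow> nat \<Rightarrow> nat \<Rightarrow> real" where
  "bvec k x Ypre Ypost v l = avg Ypre (\<lambda>y. feat k x v y l) - avg Ypost (\<lambda>y. feat k x v y l)"

text \<open>Block gradient of 1/2 z^T A z + z^T b w.r.t. theta_v (A symmetric): (A z)_v + b_v.\<close>
definition qgrad :: "nat \<Rightarrow> (nat \<Rightarrow> nat) \<Rightarrow> (nat \<Rightarrow> nat \<Rightarrow> nat \<Rightarrow> nat \<Rightarrow> real) \<Rightarrow> (nat \<Rightarrow> nat \<Rightarrow> real)
    \<Rightarrow> (nat \<Rightarrow> nat \<Rightarrow> real) \<Rightarrow> nat \<Rightarrow> nat \<Rightarrow> real" where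
  "qgrad N L A b z v l = (\<Sum>u<N. \<Sum>m<L u. A v l u m * z u m) + b v l"

text \<open>Block Gauss-Seidel sweep: gs_partial ... v = z_{v,t} (blocks < v already updated).\<close>
fun gs_partial :: "nat \<Rightarrow> (nat \<Rightarrow> nat) \<Rightarrow> (nat \<Rightarrow> nat \<Rightarrow> nat \<Rightarrow> nat \<Rightarrow> real) \<Rightarrow> (nat \<Rightarrow> nat \<Rightarrow> real)
    \<Rightarrow> real \<Rightarrow> (nat \<Rightarrow> nat \<Rightarrow> real) \<Rightarrow> nat \<Rightarrow> (nat \<Rightarrow> nat \<Rightarrow> real)" where
  "gs_partial N L A b \<alpha> \<theta> 0 = \<theta>"
| "gs_partial N L A b \<alpha> \<theta> (Suc v) =
     (let z = gs_partial N L A b \<alpha> \<theta> v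
      in z(v := (\<lambda>l. if l < L v then z v l - \<alpha> * qgrad N L A b z v l else z v l)))"

definition thnorm :: "nat \<Rightarrow> (nat \<Rightarrow> nat) \<Rightarrow> (nat \<Rightarrow> nat \<Rightarrow> real) \<Rightarrow> real" where
  "thnorm N L \<theta> = sqrt (\<Sum>v<N. \<Sum>l<L v. (\<theta> v l)\<^sup>2)"

definition prewin :: "nat \<Rightarrow> (nat \<Rightarrow> nat \<Rightarrow> 'm \<Rightarrow> (nat \<Rightarrow> 'a)) \<Rightarrow> nat \<Rightarrow> 'm \<Rightarrow> (nat \<Rightarrow> 'a) list" where
  "prewin npre ypre t \<omega> = map (\<lambda>i. ypre t i \<omega>) [0..<npre]"

text \<open>Y_t^post = {y_{t-n^post}, ..., y_t} (truncated to the available observations y_1, y_2, ...).\<close>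
definition postwin :: "nat \<Rightarrow> (nat \<Rightarrow> 'm \<Rightarrow> (nat \<Rightarrow> 'a)) \<Rightarrow> nat \<Rightarrow> 'm \<Rightarrow> (nat \<Rightarrow> 'a) list" where
  "postwin npost ystr t \<omega> = map (\<lambda>s. ystr s \<omega>) [max 1 (t - npost)..<Suc t]"

definition At where
  "At N W k x lam gam npre ypre t \<omega> = Amat N W k x lam gam (prewin npre ypre t \<omega>)"

definition bt where
  "bt k x npre npost ypre ystr t \<omega> = bvec k x (prewin npre ypre t \<omega>) (postwin npost ystr t \<omega>)"

text \<open>theta N W k x L lam gam npre npost ypre ystr c th1 t \<omega> = theta_t for t \<ge> 1, with
  step size alpha_{v,t} = c / t and initial value theta_1 = th1.\<close>
fun theta :: "nat \<Rightarrow> (nat \<Rightarrow> nat \<Rightarrow> real) \<Rightarrow> (nat \<Rightarrow> 'a \<Rightarrow> 'a \<Rightarrow> real) \<Rightarrow> (nat \<Rightarrow> nat \<Rightarrow> 'a) \<Rightarrow> (nat \<Rightarrow> nat)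
    \<Rightarrow> real \<Rightarrow> real \<Rightarrow> nat \<Rightarrow> nat \<Rightarrow> (nat \<Rightarrow> nat \<Rightarrow> 'm \<Rightarrow> (nat \<Rightarrow> 'a)) \<Rightarrow> (nat \<Rightarrow> 'm \<Rightarrow> (nat \<Rightarrow> 'a))
    \<Rightarrow> real \<Rightarrow> (nat \<Rightarrow> nat \<Rightarrow> real) \<Rightarrow> nat \<Rightarrow> 'm \<Rightarrow> (nat \<Rightarrow> nat \<Rightarrow> real)" where
  "theta N W k x L lam gam npre npost ypre ystr c th1 0 \<omega> = th1"
| "theta N W k x L lam gam npre npost ypre ystr c th1 (Suc t) \<omega> =
     (if t = 0 then th1
      else gs_partial N L (At N W k x lam gam npre ypre t \<omega>) (bt k x npre npost ypre ystr t \<omega>)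
             (c / real t) (theta N W k x L lam gam npre npost ypre ystr c th1 t \<omega>) N)"

definition ghat where
  "ghat N W k x L lam gam npre npost ypre ystr c th1 t \<omega> v =
     avg (prewin npre ypre t \<omega>)
       (\<lambda>y. \<Sum>l<L v. feat k x v y l * theta N W k x L lam gam npre npost ypre ystr c th1 (Suc t) \<omega> v l)"

text \<open>nabla bold-F with bold-F = E[F_t]: gradient E[A_t] z + E[b_t].\<close>
definition delta_sq where
  "delta_sq \<M> N W k x L lam gam npre npost ypre ystr c th1 t v \<omega> =
     (let A = At N W k x lam gam npre ypre t \<omega>;
          b = bt k x npre npost ypre ystr t \<omega>;
          Abar = (\<lambda>v l u m. integral\<^sup>L \<M> (\<lambda>\<omega>'. At N W k x lam gam npre ypre t \<omega>' v l u m));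
          bbar = (\<lambda>v l. integral\<^sup>L \<M> (\<lambda>\<omega>'. bt k x npre npost ypre ystr t \<omega>' v l));
          z = gs_partial N L A b (c / real t) (theta N W k x L lam gam npre npost ypre ystr c th1 t \<omega>) v
      in \<Sum>l<L v. (qgrad N L A b z v l - qgrad N L Abar bbar z v l)\<^sup>2)"

definition opnorm2 :: "nat \<Rightarrow> (nat \<Rightarrow> nat \<Rightarrow> real) \<Rightarrow> real" where
  "opnorm2 n A = Sup {sqrt (\<Sum>i<n. (\<Sum>j<n. A i j * z j)\<^sup>2) | z. (\<Sum>j<n. (z j)\<^sup>2) \<le> 1}"

definition lammax where
  "lammax P k x L v = opnorm2 (L v) (\<lambda>l m. \<integral>y. feat k x v y l * feat k x v y m \<partial>P)"

definition Cv where
  "Cv N W P k x L Mb lam gam v =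
     (1 + lam * gdeg N W v) * lammax P k x L v + gam + lam * Mb v * (\<Sum>u\<in>nbrs N W v. W u v * Mb u)"

definition Cmax where
  "Cmax N W P k x L Mb lam gam = Max (Cv N W P k x L Mb lam gam ` {..<N})"

definition obs_family :: "(nat \<Rightarrow> nat \<Rightarrow> 'm \<Rightarrow> 'b) \<Rightarrow> (nat \<Rightarrow> 'm \<Rightarrow> 'b) \<Rightarrow> (nat \<times> nat) + nat \<Rightarrow> 'm \<Rightarrow> 'b" where
  "obs_family ypre ystr j = (case j of Inl ti \<Rightarrow> ypre (fst ti) (snd ti) | Inr s \<Rightarrow> ystr s)"

definition obs_index :: "nat \<Rightarrow> ((nat \<times> nat) + nat) set" where
  "obs_index npre = {Inl (t, i) | t i. 1 \<le> t \<and> i < npre} \<union> {Inr s | s. 1 \<le> s}"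

end

theory Submission
  imports Defs "HOL-Probability.Probability"
begin

lemma kernel_abs_bound:
  assumes k: "reproducing_kernel X k" and a: "a \<in> X" and b: "b \<in> X"
    and B: "\<forall>p\<in>X. \<forall>q\<in>X. k p q \<le> Mb"
  shows "\<bar>k a b\<bar> \<le> Mb"
proof -
  have H: "\<And>F c. finite F \<Longrightarrow> F \<subseteq> X \<Longrightarrow> 0 \<le> (\<Sum>p\<in>F. \<Sum>q\<in>F. c p * c q * k p q)"
    using k unfolding reproducing_kernel_def by blast
  have sym: "k b a = k a b" using k a b unfolding reproducing_kernel_def by blast
  have "k a a \<le> Mb" "k b b \<le> Mb" using B a b by auto
  show ?thesis
  proof (cases "a = b")
    case True
    have "0 \<le> k a a" using H[of "{a}" "\<lambda>_. 1"] a by simp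
    then show ?thesis using True B a by auto
  next
    case False
    have 1: "0 \<le> k a a + k b b + 2 * k a b"
      using H[of "{a,b}" "\<lambda>_. 1"] a b False sym by simp
    have 2: "0 \<le> k a a + k b b - 2 * k a b"
      using H[of "{a,b}" "\<lambda>p. if p = a then 1 else -1"] a b False sym by simp
    show ?thesis using 1 2 \<open>k a a \<le> Mb\<close> \<open>k b b \<le> Mb\<close> by linarith
  qed
qed
lemma gs_partial_closed:
  "v \<le> N \<Longrightarrow> gs_partial N L A b \<alpha> \<theta> v u m =
     (if u < v \<and> m < L u then \<theta> u m - \<alpha> * qgrad N L A b (gs_partial N L A b \<alpha> \<theta> u) u m else \<theta> u m)"
proof (induction v arbitrary: u m)
  case 0
  then show ?case by simp
next
  case (Suc v)
  then have IH: "\<And>u m. gs_partial N L A b \<alpha> \<theta> v u m =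
     (if u < v \<and> m < L u then \<theta> u m - \<alpha> * qgrad N L A b (gs_partial N L A b \<alpha> \<theta> u) u m else \<theta> u m)"
    by simp
  have E: "gs_partial N L A b \<alpha> \<theta> (Suc v) u m =
    (if u = v then (if m < L v then gs_partial N L A b \<alpha> \<theta> v v m - \<alpha> * qgrad N L A b (gs_partial N L A b \<alpha> \<theta> v) v m
       else gs_partial N L A b \<alpha> \<theta> v v m) else gs_partial N L A b \<alpha> \<theta> v u m)"
    by (simp add: Let_def)
  show ?case
  proof (cases "u = v")
    case True
    then show ?thesis unfolding E using IH[of v m] by simp
  next
    case False
    then show ?thesis unfolding E using IH[of u m] by (simp add: less_Suc_eq)
  qed
qed

definition ltot :: "nat \<Rightarrow> (nat \<Rightarrow> nat) \<Rightarrow> real" where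
  "ltot N L = (\<Sum>u<N. real (L u))"

lemma qgrad_bound:
  assumes A: "\<forall>v<N. \<forall>l<L v. \<forall>u<N. \<forall>m<L u. \<bar>A v l u m\<bar> \<le> KA"
    and b: "\<forall>v<N. \<forall>l<L v. \<bar>b v l\<bar> \<le> KB"
    and z: "\<forall>u<N. \<forall>m<L u. \<bar>z u m\<bar> \<le> Z"
    and v: "v < N" and l: "l < L v" and KA: "0 \<le> KA"
  shows "\<bar>qgrad N L A b z v l\<bar> \<le> ltot N L * KA * Z + KB"
proof -
  have "\<bar>\<Sum>u<N. \<Sum>m<L u. A v l u m * z u m\<bar> \<le> (\<Sum>u<N. \<Sum>m<L u. \<bar>A v l u m * z u m\<bar>)"
    by (rule order_trans[OF sum_abs]) (intro sum_mono sum_abs)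
  also have "\<dots> \<le> (\<Sum>u<N. \<Sum>m<L u. KA * Z)"
    using A z v l KA by (intro sum_mono) (simp add: abs_mult mult_mono)
  also have "\<dots> = ltot N L * KA * Z"
    by (simp add: ltot_def sum_distrib_right mult.assoc)
  finally have S: "\<bar>\<Sum>u<N. \<Sum>m<L u. A v l u m * z u m\<bar> \<le> ltot N L * KA * Z" .
  have "\<bar>b v l\<bar> \<le> KB" using b v l by blast
  then show ?thesis using S abs_triangle_ineq[of "\<Sum>u<N. \<Sum>m<L u. A v l u m * z u m" "b v l"]
    unfolding qgrad_def by linarith
qed

fun zb :: "real \<Rightarrow> real \<Rightarrow> real \<Rightarrow> real \<Rightarrow> nat \<Rightarrow> real" where
  "zb a c kb r 0 = r"
| "zb a c kb r (Suc v) = zb a c kb r v + c * (a * zb a c kb r v + kb)"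

lemma zb_nonneg: "0 \<le> a \<Longrightarrow> 0 \<le> c \<Longrightarrow> 0 \<le> kb \<Longrightarrow> 0 \<le> r \<Longrightarrow> 0 \<le> zb a c kb r v"
  by (induction v) auto

lemma zb_mono: assumes "0 \<le> a" "0 \<le> c" "0 \<le> kb" "0 \<le> r" "w \<le> v"
  shows "zb a c kb r w \<le> zb a c kb r v"
  using assms(5)
proof (induction v)
  case 0 then show ?case by simp
next
  case (Suc v)
  have "0 \<le> c * (a * zb a c kb r v + kb)"
    using assms zb_nonneg[OF assms(1-4)] by simp
  then show ?case using Suc by (cases "w = Suc v") (auto simp: le_Suc_eq)
qed

lemma ltot_nonneg: "0 \<le> ltot N L" by (simp add: ltot_def sum_nonneg)

lemma gs_bound:
  assumes A: "\<forall>v<N. \<forall>l<L v. \<forall>u<N. \<forall>m<L u. \<bar>A v l u m\<bar> \<le> KA"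
    and b: "\<forall>v<N. \<forall>l<L v. \<bar>b v l\<bar> \<le> KB"
    and th: "\<forall>u<N. \<forall>m<L u. \<bar>\<theta> u m\<bar> \<le> R"
    and KA: "0 \<le> KA" and KB: "0 \<le> KB" and R: "0 \<le> R" and al: "0 \<le> \<alpha>" "\<alpha> \<le> c"
  shows "w \<le> N \<Longrightarrow> \<forall>u<N. \<forall>m<L u. \<bar>gs_partial N L A b \<alpha> \<theta> w u m\<bar> \<le> zb (ltot N L * KA) c KB R w"
proof (induction w)
  case 0 then show ?case using th by simp
next
  case (Suc w)
  let ?z = "gs_partial N L A b \<alpha> \<theta> w"
  let ?Z = "zb (ltot N L * KA) c KB R w"
  have IH: "\<forall>u<N. \<forall>m<L u. \<bar>?z u m\<bar> \<le> ?Z" using Suc by simp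
  have w: "w < N" using Suc by simp
  have Z0: "0 \<le> ?Z" using zb_nonneg[of "ltot N L * KA" c KB R w] KA KB R al ltot_nonneg by simp
  show ?case
  proof (intro allI impI)
    fix u m assume u: "u < N" and m: "m < L u"
    have E: "gs_partial N L A b \<alpha> \<theta> (Suc w) u m =
      (if u = w then (if m < L w then ?z w m - \<alpha> * qgrad N L A b ?z w m else ?z w m) else ?z u m)"
      by (simp add: Let_def)
    have step: "?Z \<le> zb (ltot N L * KA) c KB R (Suc w)"
      using zb_mono[of "ltot N L * KA" c KB R w "Suc w"] KA KB R al ltot_nonneg by simp
    show "\<bar>gs_partial N L A b \<alpha> \<theta> (Suc w) u m\<bar> \<le> zb (ltot N L * KA) c KB R (Suc w)"
    proof (cases "u = w")
      case True
      with m have mw: "m < L w" by simp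
      have q: "\<bar>qgrad N L A b ?z w m\<bar> \<le> ltot N L * KA * ?Z + KB"
        by (rule qgrad_bound[OF A b IH w mw KA])
      have "\<bar>\<alpha> * qgrad N L A b ?z w m\<bar> \<le> c * (ltot N L * KA * ?Z + KB)"
        using q al by (simp add: abs_mult) (rule mult_mono, auto)
      moreover have "\<bar>?z w m\<bar> \<le> ?Z" using IH w mw by blast
      ultimately show ?thesis unfolding E using True mw by simp
    next
      case False
      have "\<bar>?z u m\<bar> \<le> ?Z" using IH u m by blast
      then show ?thesis unfolding E using False step by simp
    qed
  qed
qed

definition ns :: "nat \<Rightarrow> (nat \<Rightarrow> nat) \<Rightarrow> (nat \<Rightarrow> nat \<Rightarrow> real) \<Rightarrow> real" where
  "ns N L \<theta> = (\<Sum>v<N. \<Sum>l<L v. (\<theta> v l)\<^sup>2)"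

definition ip :: "nat \<Rightarrow> (nat \<Rightarrow> nat) \<Rightarrow> (nat \<Rightarrow> nat \<Rightarrow> real) \<Rightarrow> (nat \<Rightarrow> nat \<Rightarrow> real) \<Rightarrow> real" where
  "ip N L \<theta> \<phi> = (\<Sum>v<N. \<Sum>l<L v. \<theta> v l * \<phi> v l)"

lemma sum_sum_const: "(\<Sum>v<N. \<Sum>l<L v. (C::real)) = ltot N L * C"
  by (simp add: ltot_def sum_distrib_right)

lemma sum_L_mult: "(\<Sum>v<N. real (L v) * X) = ltot N L * X"
  by (simp add: ltot_def sum_distrib_right)

lemma step_ineq:
  assumes A: "\<forall>v<N. \<forall>l<L v. \<forall>u<N. \<forall>m<L u. \<bar>A v l u m\<bar> \<le> KA"
    and b: "\<forall>v<N. \<forall>l<L v. \<bar>b v l\<bar> \<le> KB"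
    and th: "\<forall>u<N. \<forall>m<L u. \<bar>\<theta> u m\<bar> \<le> R"
    and KA: "0 \<le> KA" and KB: "0 \<le> KB" and R: "0 \<le> R" and al: "0 \<le> \<alpha>" "\<alpha> \<le> c"
  defines "Q \<equiv> ltot N L * KA * zb (ltot N L * KA) c KB R N + KB"
  shows "\<forall>v<N. \<forall>l<L v. gs_partial N L A b \<alpha> \<theta> N v l = \<theta> v l - \<alpha> * qgrad N L A b (gs_partial N L A b \<alpha> \<theta> v) v l
            \<and> \<bar>qgrad N L A b (gs_partial N L A b \<alpha> \<theta> v) v l\<bar> \<le> Q"
    and "ns N L (gs_partial N L A b \<alpha> \<theta> N) \<le> ns N L \<theta> - 2 * \<alpha> * ip N L \<theta> (qgrad N L A b \<theta>)
            + \<alpha>\<^sup>2 * (ltot N L * (2 * R * (ltot N L * KA) * Q + Q\<^sup>2))"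
proof -
  let ?gs = "gs_partial N L A b \<alpha> \<theta>"
  let ?a = "ltot N L * KA"
  have a0: "0 \<le> ?a" using KA ltot_nonneg by simp
  have c0: "0 \<le> c" using al by simp
  have qb: "\<bar>qgrad N L A b (?gs v) v l\<bar> \<le> Q" if v: "v < N" and l: "l < L v" for v l
  proof -
    have zv: "\<forall>u<N. \<forall>m<L u. \<bar>?gs v u m\<bar> \<le> zb ?a c KB R v"
      using gs_bound[OF A b th KA KB R al] v by simp
    have "zb ?a c KB R v \<le> zb ?a c KB R N" using zb_mono[OF a0 c0 KB R] v by simp
    then have zv': "\<forall>u<N. \<forall>m<L u. \<bar>?gs v u m\<bar> \<le> zb ?a c KB R N" using zv by force
    show ?thesis unfolding Q_def by (rule qgrad_bound[OF A b zv' v l KA])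
  qed
  have cl: "?gs N v l = \<theta> v l - \<alpha> * qgrad N L A b (?gs v) v l" if "v < N" "l < L v" for v l
    using gs_partial_closed[of N N L A b \<alpha> \<theta> v l] that by simp
  show "\<forall>v<N. \<forall>l<L v. ?gs N v l = \<theta> v l - \<alpha> * qgrad N L A b (?gs v) v l
            \<and> \<bar>qgrad N L A b (?gs v) v l\<bar> \<le> Q" using qb cl by blast
  have Q0: "0 \<le> Q" unfolding Q_def using a0 KB zb_nonneg[OF a0 c0 KB R, of N] by simp
  have pt: "(?gs N v l)\<^sup>2 \<le> (\<theta> v l)\<^sup>2 - 2 * \<alpha> * (\<theta> v l * qgrad N L A b \<theta> v l)
            + \<alpha>\<^sup>2 * (2 * R * ?a * Q + Q\<^sup>2)" if v: "v < N" and l: "l < L v" for v l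
  proof -
    define g where "g = qgrad N L A b \<theta> v l"
    define d where "d = qgrad N L A b (?gs v) v l - g"
    have dd: "d = (\<Sum>u<N. \<Sum>m<L u. A v l u m * (?gs v u m - \<theta> u m))"
      unfolding d_def g_def qgrad_def by (simp add: sum_subtractf right_diff_distrib)
    have diff: "\<bar>?gs v u m - \<theta> u m\<bar> \<le> \<alpha> * Q" if u: "u < N" and m: "m < L u" for u m
    proof -
      have "v \<le> N" using v by simp
      then have "?gs v u m - \<theta> u m = (if u < v \<and> m < L u then - (\<alpha> * qgrad N L A b (?gs u) u m) else 0)"
        using gs_partial_closed[of v N L A b \<alpha> \<theta> u m] by simp
      then show ?thesis using qb[OF u m] al Q0 by (simp add: abs_mult mult_left_mono)
    qed
    have "\<bar>d\<bar> \<le> (\<Sum>u<N. \<Sum>m<L u. \<bar>A v l u m * (?gs v u m - \<theta> u m)\<bar>)"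
      unfolding dd by (rule order_trans[OF sum_abs]) (intro sum_mono sum_abs)
    also have "\<dots> \<le> (\<Sum>u<N. \<Sum>m<L u. KA * (\<alpha> * Q))"
      using A v l diff KA by (intro sum_mono) (simp add: abs_mult mult_mono)
    also have "\<dots> = \<alpha> * (?a * Q)" by (simp only: sum_sum_const) (simp add: algebra_simps)
    finally have dB: "\<bar>d\<bar> \<le> \<alpha> * (?a * Q)" .
    have gd: "\<bar>g + d\<bar> \<le> Q" using qb[OF v l] unfolding d_def by simp
    have thR: "\<bar>\<theta> v l\<bar> \<le> R" using th v l by blast
    have e: "?gs N v l = \<theta> v l - \<alpha> * (g + d)" using cl[OF v l] unfolding d_def by simp
    have sq: "(g + d)\<^sup>2 \<le> Q\<^sup>2" using gd by (metis abs_le_square_iff abs_of_nonneg Q0 power2_abs)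
    have "- (\<theta> v l * d) \<le> \<bar>\<theta> v l\<bar> * \<bar>d\<bar>" by (simp add: abs_mult[symmetric] abs_le_iff)
    also have "\<dots> \<le> R * (\<alpha> * (?a * Q))" using thR dB by (intro mult_mono) auto
    finally have td: "- (\<theta> v l * d) \<le> R * (\<alpha> * (?a * Q))" .
    have "(?gs N v l)\<^sup>2 = (\<theta> v l)\<^sup>2 - 2 * \<alpha> * (\<theta> v l * g) + 2 * \<alpha> * (- (\<theta> v l * d)) + \<alpha>\<^sup>2 * (g + d)\<^sup>2"
      unfolding e by (simp add: power2_eq_square algebra_simps)
    also have "\<dots> \<le> (\<theta> v l)\<^sup>2 - 2 * \<alpha> * (\<theta> v l * g) + 2 * \<alpha> * (R * (\<alpha> * (?a * Q))) + \<alpha>\<^sup>2 * Q\<^sup>2"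
      using td sq al by (intro add_mono mult_left_mono) auto
    also have "\<dots> = (\<theta> v l)\<^sup>2 - 2 * \<alpha> * (\<theta> v l * g) + \<alpha>\<^sup>2 * (2 * R * ?a * Q + Q\<^sup>2)"
      by (simp add: power2_eq_square algebra_simps)
    finally show ?thesis unfolding g_def .
  qed
  have "ns N L (?gs N) \<le> (\<Sum>v<N. \<Sum>l<L v. (\<theta> v l)\<^sup>2 - 2 * \<alpha> * (\<theta> v l * qgrad N L A b \<theta> v l)
            + \<alpha>\<^sup>2 * (2 * R * ?a * Q + Q\<^sup>2))"
    unfolding ns_def using pt by (intro sum_mono) auto
  also have "\<dots> = ns N L \<theta> - 2 * \<alpha> * ip N L \<theta> (qgrad N L A b \<theta>) + \<alpha>\<^sup>2 * (ltot N L * (2 * R * ?a * Q + Q\<^sup>2))"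
    unfolding ns_def ip_def by (simp add: sum.distrib sum_subtractf sum_distrib_left sum_L_mult)
  finally show "ns N L (?gs N) \<le> ns N L \<theta> - 2 * \<alpha> * ip N L \<theta> (qgrad N L A b \<theta>)
            + \<alpha>\<^sup>2 * (ltot N L * (2 * R * ?a * Q + Q\<^sup>2))" .
qed

lemma gdeg_sum:
  assumes W_nonneg: "\<forall>u<N. \<forall>v<N. 0 \<le> W u v" and v: "v < N"
  shows "gdeg N W v = (\<Sum>u<N. W u v)"
  unfolding gdeg_def nbrs_def
proof (rule sum.mono_neutral_left)
  show "finite {..<N}" by simp
  show "{u. u < N \<and> 0 < W u v} \<subseteq> {..<N}" by auto
  show "\<forall>i\<in>{..<N} - {u. u < N \<and> 0 < W u v}. W i v = 0"
    using W_nonneg v by force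
qed

lemma lap_psd:
  assumes W_nonneg: "\<forall>u<N. \<forall>v<N. 0 \<le> W u v"
    and W_sym: "\<forall>u<N. \<forall>v<N. W u v = W v u"
  shows "0 \<le> (\<Sum>v<N. \<Sum>u<N. s v * glap N W v u * s u)"
proof -
  have e1: "(\<Sum>v<N. \<Sum>u<N. s v * glap N W v u * s u)
      = (\<Sum>v<N. \<Sum>u<N. W u v * (s v)\<^sup>2) - (\<Sum>v<N. \<Sum>u<N. W u v * s v * s u)"
  proof -
    have "(\<Sum>v<N. \<Sum>u<N. s v * glap N W v u * s u)
        = (\<Sum>v<N. (\<Sum>u<N. s v * (if v = u then gdeg N W u else 0) * s u) - (\<Sum>u<N. W u v * s v * s u))"
      unfolding glap_def using W_sym
      by (intro sum.cong refl) (simp add: sum_subtractf algebra_simps)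
    also have "\<dots> = (\<Sum>v<N. (\<Sum>u<N. W u v * (s v)\<^sup>2) - (\<Sum>u<N. W u v * s v * s u))"
    proof (intro sum.cong refl)
      fix v assume v: "v \<in> {..<N}"
      have "(\<Sum>u<N. s v * (if v = u then gdeg N W u else 0) * s u) = s v * gdeg N W v * s v"
        using v by (simp add: if_distrib if_distribR sum.delta cong: if_cong)
      also have "\<dots> = (\<Sum>u<N. W u v * (s v)\<^sup>2)"
        unfolding gdeg_sum[OF W_nonneg v[simplified]]
        by (subst sum_distrib_left, subst sum_distrib_right, rule sum.cong, simp_all add: power2_eq_square)
      finally show "(\<Sum>u<N. s v * (if v = u then gdeg N W u else 0) * s u) - (\<Sum>u<N. W u v * s v * s u) =
         (\<Sum>u<N. W u v * (s v)\<^sup>2) - (\<Sum>u<N. W u v * s v * s u)" by simp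
    qed
    also have "\<dots> = (\<Sum>v<N. \<Sum>u<N. W u v * (s v)\<^sup>2) - (\<Sum>v<N. \<Sum>u<N. W u v * s v * s u)"
      by (simp add: sum_subtractf)
    finally show ?thesis .
  qed
  have e2: "(\<Sum>v<N. \<Sum>u<N. W u v * (s u)\<^sup>2) = (\<Sum>v<N. \<Sum>u<N. W u v * (s v)\<^sup>2)"
  proof -
    have "(\<Sum>v<N. \<Sum>u<N. W u v * (s u)\<^sup>2) = (\<Sum>u<N. \<Sum>v<N. W u v * (s u)\<^sup>2)"
      by (rule sum.swap)
    also have "\<dots> = (\<Sum>u<N. \<Sum>v<N. W v u * (s u)\<^sup>2)"
      using W_sym by (intro sum.cong refl) auto
    finally show ?thesis .
  qed
  have "0 \<le> (\<Sum>v<N. \<Sum>u<N. W u v * (s v - s u)\<^sup>2)"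
    using W_nonneg by (intro sum_nonneg) auto
  also have "(\<Sum>v<N. \<Sum>u<N. W u v * (s v - s u)\<^sup>2)
      = (\<Sum>v<N. \<Sum>u<N. W u v * (s v)\<^sup>2) - 2 * (\<Sum>v<N. \<Sum>u<N. W u v * s v * s u)
        + (\<Sum>v<N. \<Sum>u<N. W u v * (s u)\<^sup>2)"
    by (simp add: power2_eq_square algebra_simps sum.distrib sum_subtractf sum_distrib_left)
  finally show ?thesis using e1 e2 by simp
qed

lemma avg_sum: "finite A \<Longrightarrow> avg xs (\<lambda>y. \<Sum>a\<in>A. f a y) = (\<Sum>a\<in>A. avg xs (f a))"
  unfolding avg_def by (induction A rule: finite_induct) (auto simp: sum_list_addf add_divide_distrib)

lemma avg_cmult: "avg xs (\<lambda>y. c * f y) = c * avg xs f"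
  unfolding avg_def by (simp add: sum_list_const_mult)

lemma avg_multc: "avg xs (\<lambda>y. f y * c) = avg xs f * c"
  unfolding avg_def by (simp add: sum_list_mult_const)

lemma avg_nonneg: "(\<And>y. y \<in> set xs \<Longrightarrow> 0 \<le> f y) \<Longrightarrow> 0 \<le> avg xs f"
  unfolding avg_def by (intro divide_nonneg_nonneg sum_list_nonneg) auto

lemma quad_feat:
  fixes f :: "nat \<Rightarrow> nat \<Rightarrow> real" and L :: "nat \<Rightarrow> nat" and \<theta> :: "nat \<Rightarrow> nat \<Rightarrow> real"
  defines "s \<equiv> (\<lambda>v. \<Sum>l<L v. f v l * \<theta> v l)"
  shows "(\<Sum>v<N. \<Sum>l<L v. \<theta> v l * (\<Sum>u<N. \<Sum>m<L u.
            ((if v = u then f v l * f v m else 0) + lam * (f v l * G v u * f u m)) * \<theta> u m))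
       = (\<Sum>v<N. (s v)\<^sup>2) + lam * (\<Sum>v<N. \<Sum>u<N. s v * G v u * s u)"
proof -
  have inner: "(\<Sum>l<L v. \<theta> v l * (\<Sum>u<N. \<Sum>m<L u.
            ((if v = u then f v l * f v m else 0) + lam * (f v l * G v u * f u m)) * \<theta> u m))
       = (\<Sum>u<N. (if v = u then s v * s u else 0) + lam * (s v * G v u * s u))" if v: "v < N" for v
  proof -
    have "(\<Sum>l<L v. \<theta> v l * (\<Sum>u<N. \<Sum>m<L u.
            ((if v = u then f v l * f v m else 0) + lam * (f v l * G v u * f u m)) * \<theta> u m))
        = (\<Sum>u<N. \<Sum>l<L v. \<Sum>m<L u. \<theta> v l *
            (((if v = u then f v l * f v m else 0) + lam * (f v l * G v u * f u m)) * \<theta> u m))"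
      by (subst sum.swap) (simp add: sum_distrib_left)
    also have "\<dots> = (\<Sum>u<N. (if v = u then s v * s u else 0) + lam * (s v * G v u * s u))"
    proof (intro sum.cong refl)
      fix u assume u: "u \<in> {..<N}"
      have p: "s v * s u = (\<Sum>l<L v. \<Sum>m<L u. (f v l * \<theta> v l) * (f u m * \<theta> u m))"
        unfolding s_def by (rule sum_product)
      have "(\<Sum>l<L v. \<Sum>m<L u. \<theta> v l *
            (((if v = u then f v l * f v m else 0) + lam * (f v l * G v u * f u m)) * \<theta> u m))
          = (\<Sum>l<L v. \<Sum>m<L u. (if v = u then (f v l * \<theta> v l) * (f u m * \<theta> u m) else 0)
              + (lam * G v u) * ((f v l * \<theta> v l) * (f u m * \<theta> u m)))"
        by (intro sum.cong refl) (auto simp: algebra_simps)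
      also have "\<dots> = (if v = u then s v * s u else 0) + (lam * G v u) * (s v * s u)"
        unfolding p by (simp add: sum.distrib sum_distrib_left)
      also have "\<dots> = (if v = u then s v * s u else 0) + lam * (s v * G v u * s u)"
        by (simp add: algebra_simps)
      finally show "(\<Sum>l<L v. \<Sum>m<L u. \<theta> v l *
            (((if v = u then f v l * f v m else 0) + lam * (f v l * G v u * f u m)) * \<theta> u m))
          = (if v = u then s v * s u else 0) + lam * (s v * G v u * s u)" .
    qed
    finally show ?thesis .
  qed
  have "(\<Sum>v<N. \<Sum>l<L v. \<theta> v l * (\<Sum>u<N. \<Sum>m<L u.
            ((if v = u then f v l * f v m else 0) + lam * (f v l * G v u * f u m)) * \<theta> u m))
      = (\<Sum>v<N. \<Sum>u<N. (if v = u then s v * s u else 0) + lam * (s v * G v u * s u))"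
    by (rule sum.cong[OF refl]) (simp add: inner)
  also have "\<dots> = (\<Sum>v<N. \<Sum>u<N. (if v = u then s v * s u else 0)) + (\<Sum>v<N. \<Sum>u<N. lam * (s v * G v u * s u))"
    by (simp only: sum.distrib)
  also have "(\<Sum>v<N. \<Sum>u<N. (if v = u then s v * s u else 0)) = (\<Sum>v<N. (s v)\<^sup>2)"
    by (rule sum.cong[OF refl]) (simp add: sum.delta power2_eq_square)
  also have "(\<Sum>v<N. \<Sum>u<N. lam * (s v * G v u * s u)) = lam * (\<Sum>v<N. \<Sum>u<N. s v * G v u * s u)"
    by (simp add: sum_distrib_left)
  finally show ?thesis .
qed

lemma amat_psd:
  assumes W_nonneg: "\<forall>u<N. \<forall>v<N. 0 \<le> W u v"
    and W_sym: "\<forall>u<N. \<forall>v<N. W u v = W v u" and lam: "0 \<le> lam"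
  shows "gam * ns N L \<theta> \<le> ip N L \<theta> (\<lambda>v l. \<Sum>u<N. \<Sum>m<L u. Amat N W k x lam gam Ys v l u m * \<theta> u m)"
proof -
  define F where "F = (\<lambda>y v l u m. (if v = u then feat k x v y l * feat k x v y m else 0)
                 + lam * (feat k x v y l * glap N W v u * feat k x u y m))"
  have split: "ip N L \<theta> (\<lambda>v l. \<Sum>u<N. \<Sum>m<L u. Amat N W k x lam gam Ys v l u m * \<theta> u m)
     = (\<Sum>v<N. \<Sum>l<L v. \<theta> v l * (\<Sum>u<N. \<Sum>m<L u. avg Ys (\<lambda>y. F y v l u m) * \<theta> u m))
       + (\<Sum>v<N. \<Sum>l<L v. \<theta> v l * (\<Sum>u<N. \<Sum>m<L u. gam * (if v = u \<and> l = m then 1 else 0) * \<theta> u m))"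
    unfolding ip_def Amat_def F_def
    by (simp add: sum.distrib distrib_left distrib_right)
  have g: "(\<Sum>v<N. \<Sum>l<L v. \<theta> v l * (\<Sum>u<N. \<Sum>m<L u. gam * (if v = u \<and> l = m then 1 else 0) * \<theta> u m))
      = gam * ns N L \<theta>"
  proof -
    have "(\<Sum>u<N. \<Sum>m<L u. gam * (if v = u \<and> l = m then 1 else 0) * \<theta> u m) = gam * \<theta> v l"
      if "v < N" "l < L v" for v l
    proof -
      have "(\<Sum>u<N. \<Sum>m<L u. gam * (if v = u \<and> l = m then 1 else 0) * \<theta> u m)
          = (\<Sum>u<N. if v = u then (\<Sum>m<L u. gam * (if l = m then 1 else 0) * \<theta> u m) else 0)"
        by (intro sum.cong refl) auto
      also have "\<dots> = (\<Sum>m<L v. gam * (if l = m then 1 else 0) * \<theta> v m)"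
        using that by (simp add: sum.delta)
      also have "\<dots> = gam * \<theta> v l" using that
        by (simp add: if_distrib if_distribR sum.delta cong: if_cong)
      finally show ?thesis .
    qed
    then show ?thesis unfolding ns_def
      by (simp add: sum_distrib_left power2_eq_square algebra_simps)
  qed
  have a: "(\<Sum>v<N. \<Sum>l<L v. \<theta> v l * (\<Sum>u<N. \<Sum>m<L u. avg Ys (\<lambda>y. F y v l u m) * \<theta> u m))
     = avg Ys (\<lambda>y. \<Sum>v<N. \<Sum>l<L v. \<theta> v l * (\<Sum>u<N. \<Sum>m<L u. F y v l u m * \<theta> u m))"
    by (simp add: avg_sum avg_cmult avg_multc)
  have "0 \<le> avg Ys (\<lambda>y. \<Sum>v<N. \<Sum>l<L v. \<theta> v l * (\<Sum>u<N. \<Sum>m<L u. F y v l u m * \<theta> u m))"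
  proof (rule avg_nonneg)
    fix y
    let ?s = "\<lambda>v. \<Sum>l<L v. feat k x v y l * \<theta> v l"
    have "(\<Sum>v<N. \<Sum>l<L v. \<theta> v l * (\<Sum>u<N. \<Sum>m<L u. F y v l u m * \<theta> u m))
       = (\<Sum>v<N. (?s v)\<^sup>2) + lam * (\<Sum>v<N. \<Sum>u<N. ?s v * glap N W v u * ?s u)"
      unfolding F_def by (rule quad_feat)
    also have "0 \<le> \<dots>"
      using lap_psd[OF W_nonneg W_sym, of ?s] lam by (intro add_nonneg_nonneg sum_nonneg) auto
    finally show "0 \<le> (\<Sum>v<N. \<Sum>l<L v. \<theta> v l * (\<Sum>u<N. \<Sum>m<L u. F y v l u m * \<theta> u m))" .
  qed
  then show ?thesis using split g a by simp
qed

lemma chung: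
  fixes e :: "nat \<Rightarrow> real"
  assumes e0: "\<And>t. 0 \<le> e t" and a: "0 < a" and K: "0 \<le> K"
    and rec: "\<And>t. T0 \<le> t \<Longrightarrow> e (Suc t) \<le> (1 - a / real t) * e t + K / (real t)\<^sup>2"
  shows "e \<longlonglongrightarrow> 0"
proof (rule LIMSEQ_I)
  fix r :: real assume r: "0 < r"
  define \<epsilon> where "\<epsilon> = r / 2"
  have \<epsilon>: "0 < \<epsilon>" using r by (simp add: \<epsilon>_def)
  define T1 where "T1 = max (max T0 1) (max (nat \<lceil>a\<rceil>) (nat \<lceil>2 * K / (a * \<epsilon>)\<rceil>))"
  have T1: "T0 \<le> T1" "1 \<le> T1" "a \<le> real T1" "2 * K / (a * \<epsilon>) \<le> real T1"
    unfolding T1_def by (auto simp: le_max_iff_disj) (linarith+)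
  have key: "e (Suc t) \<le> (1 - a / real t) * e t + (a * \<epsilon> / 2) / real t" if t: "T1 \<le> t" for t
  proof -
    have tp: "0 < real t" using t T1 by simp
    have "2 * K / (a * \<epsilon>) \<le> real t" using t T1 by linarith
    then have "2 * K \<le> real t * (a * \<epsilon>)" using a \<epsilon> by (simp add: divide_le_eq)
    then have "K / real t \<le> a * \<epsilon> / 2" using tp by (simp add: divide_le_eq mult.commute)
    then have "K / (real t)\<^sup>2 \<le> (a * \<epsilon> / 2) / real t"
      using tp by (simp add: power2_eq_square divide_right_mono flip: divide_divide_eq_left)
    moreover have "e (Suc t) \<le> (1 - a / real t) * e t + K / (real t)\<^sup>2" using rec t T1 by simp
    ultimately show ?thesis by linarith
  qed
  have stay: "e (Suc t) \<le> \<epsilon>" if t: "T1 \<le> t" and et: "e t \<le> \<epsilon>" for t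
  proof -
    have tp: "0 < real t" using t T1 by simp
    have "a / real t \<le> 1" using t T1 tp by (simp add: divide_le_eq)
    then have "(1 - a / real t) * e t \<le> (1 - a / real t) * \<epsilon>" using et by (intro mult_left_mono) auto
    moreover have "(1 - a / real t) * \<epsilon> + (a * \<epsilon> / 2) / real t \<le> \<epsilon>"
      using a \<epsilon> tp by (simp add: algebra_simps)
    ultimately show ?thesis using key[OF t] by linarith
  qed
  have dec: "e (Suc t) \<le> e t - (a * \<epsilon> / 2) / real t" if t: "T1 \<le> t" and et: "\<epsilon> < e t" for t
  proof -
    have tp: "0 < real t" using t T1 by simp
    have "a / real t * \<epsilon> \<le> a / real t * e t" using et a tp by (intro mult_left_mono) auto
    then have "(1 - a / real t) * e t + (a * \<epsilon> / 2) / real t \<le> e t - (a * \<epsilon> / 2) / real t"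
      by (simp add: algebra_simps)
    then show ?thesis using key[OF t] by linarith
  qed
  have ex: "\<exists>t\<ge>T1. e t \<le> \<epsilon>"
  proof (rule ccontr)
    assume "\<not> ?thesis"
    then have big: "\<And>t. T1 \<le> t \<Longrightarrow> \<epsilon> < e t" by (meson not_le)
    have ind: "e (T1 + n) \<le> e T1 - (a * \<epsilon> / 2) * (\<Sum>j<n. inverse (real (j + T1)))" for n
    proof (induction n)
      case 0 then show ?case by simp
    next
      case (Suc n)
      have "e (Suc (T1 + n)) \<le> e (T1 + n) - (a * \<epsilon> / 2) / real (T1 + n)"
        using dec[of "T1 + n", OF le_add1 big[OF le_add1]] by (simp only: add_Suc_right)
      moreover have "(a * \<epsilon> / 2) / real (T1 + n) = (a * \<epsilon> / 2) * inverse (real (n + T1))"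
        by (simp only: divide_inverse add.commute)
      moreover have "(a * \<epsilon> / 2) * (\<Sum>j<Suc n. inverse (real (j + T1)))
          = (a * \<epsilon> / 2) * (\<Sum>j<n. inverse (real (j + T1))) + (a * \<epsilon> / 2) * inverse (real (n + T1))"
        by (simp only: sum.lessThan_Suc distrib_left)
      moreover have "e (T1 + Suc n) = e (Suc (T1 + n))" by simp
      ultimately show ?case using Suc.IH by linarith
    qed
    have bnd: "(\<Sum>j<n. inverse (real (j + T1))) \<le> e T1 / (a * \<epsilon> / 2)" for n
    proof -
      have "(a * \<epsilon> / 2) * (\<Sum>j<n. inverse (real (j + T1))) \<le> e T1"
        using ind[of n] e0[of "T1 + n"] by linarith
      then show ?thesis using a \<epsilon> by (simp add: le_divide_eq mult.commute)
    qed
    have "summable (\<lambda>j. inverse (real (j + T1)))"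
      by (rule summableI_nonneg_bounded[where x="e T1 / (a * \<epsilon> / 2)"]) (use bnd in auto)
    then have "summable (\<lambda>j. inverse (real j))"
      using summable_iff_shift[of "\<lambda>j. inverse (real j)" T1] by simp
    then show False using not_summable_harmonic by blast
  qed
  then obtain t0 where t0: "T1 \<le> t0" "e t0 \<le> \<epsilon>" by blast
  have all: "e (t0 + n) \<le> \<epsilon>" for n
  proof (induction n)
    case 0 then show ?case using t0 by simp
  next
    case (Suc n) then show ?case using stay[of "t0 + n"] t0 by simp
  qed
  show "\<exists>no. \<forall>n\<ge>no. norm (e n - 0) < r"
  proof (intro exI allI impI)
    fix n assume "t0 \<le> n"
    then have "e n \<le> \<epsilon>" using all[of "n - t0"] by simp
    then show "norm (e n - 0) < r" using e0[of n] r by (simp add: \<epsilon>_def)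
  qed
qed

lemma avg_map_upt: "avg (map g [a..<b]) f = (\<Sum>i\<in>{a..<b}. f (g i)) / real (b - a)"
  unfolding avg_def by (simp add: interv_sum_list_conv_sum_set_nat comp_def)

lemma prewin_avg: "avg (prewin npre ypre t \<omega>) f = (\<Sum>i\<in>{0..<npre}. f (ypre t i \<omega>)) / real npre"
  unfolding prewin_def avg_map_upt by simp

lemma postwin_avg: "avg (postwin npost ystr t \<omega>) f
   = (\<Sum>s\<in>{max 1 (t - npost)..<Suc t}. f (ystr s \<omega>)) / real (Suc t - max 1 (t - npost))"
  unfolding postwin_def avg_map_upt by simp

lemma theta_dep:
  assumes "\<And>t' i. 1 \<le> t' \<Longrightarrow> t' < s \<Longrightarrow> i < npre \<Longrightarrow> ypre t' i \<omega> = ypre2 t' i \<omega>2"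
    and "\<And>s'. 1 \<le> s' \<Longrightarrow> s' < s \<Longrightarrow> ystr s' \<omega> = ystr2 s' \<omega>2"
  shows "theta N W k x L lam gam npre npost ypre ystr c th1 s \<omega>
       = theta N W k x L lam gam npre npost ypre2 ystr2 c th1 s \<omega>2"
  using assms
proof (induction s)
  case 0 then show ?case by simp
next
  case (Suc t)
  show ?case
  proof (cases "t = 0")
    case True then show ?thesis by simp
  next
    case False
    have pre: "prewin npre ypre t \<omega> = prewin npre ypre2 t \<omega>2"
      unfolding prewin_def using Suc.prems(1)[of t] False by (intro map_cong) auto
    have post: "postwin npost ystr t \<omega> = postwin npost ystr2 t \<omega>2"
      unfolding postwin_def using Suc.prems(2) by (intro map_cong) auto
    have IH: "theta N W k x L lam gam npre npost ypre ystr c th1 t \<omega>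
       = theta N W k x L lam gam npre npost ypre2 ystr2 c th1 t \<omega>2"
      using Suc.prems by (intro Suc.IH) auto
    show ?thesis using False pre post IH by (simp add: At_def bt_def)
  qed
qed

lemma bt_dep:
  assumes "\<And>i. i < npre \<Longrightarrow> ypre t i \<omega> = ypre2 t i \<omega>2"
    and "\<And>s'. max 1 (t - npost) \<le> s' \<Longrightarrow> s' \<le> t \<Longrightarrow> ystr s' \<omega> = ystr2 s' \<omega>2"
  shows "bt k x npre npost ypre ystr t \<omega> = bt k x npre npost ypre2 ystr2 t \<omega>2"
proof -
  have pre: "prewin npre ypre t \<omega> = prewin npre ypre2 t \<omega>2"
    unfolding prewin_def using assms(1) by (intro map_cong) auto
  have post: "postwin npost ystr t \<omega> = postwin npost ystr2 t \<omega>2"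
    unfolding postwin_def using assms(2) by (intro map_cong) auto
  show ?thesis unfolding bt_def pre post ..
qed

lemma feat_meas:
  assumes Y: "Y \<in> measurable M' (PiM {..<N} Xs)" and v: "v < N" and xs: "x v l \<in> space (Xs v)"
    and km: "(\<lambda>(a, b). k v a b) \<in> borel_measurable (Xs v \<Otimes>\<^sub>M Xs v)"
  shows "(\<lambda>\<omega>. feat k x v (Y \<omega>) l) \<in> borel_measurable M'"
proof -
  have Yv: "(\<lambda>\<omega>. Y \<omega> v) \<in> measurable M' (Xs v)"
    using measurable_compose[OF Y measurable_component_singleton[of v "{..<N}" Xs]] v by (simp add: comp_def)
  have P: "(\<lambda>\<omega>. (Y \<omega> v, x v l)) \<in> measurable M' (Xs v \<Otimes>\<^sub>M Xs v)"
    using Yv xs by (intro measurable_Pair) auto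
  show ?thesis
    using measurable_compose[OF P km] unfolding feat_def by simp
qed

lemma gs_meas:
  assumes A: "\<And>v l u m. v < N \<Longrightarrow> l < L v \<Longrightarrow> u < N \<Longrightarrow> m < L u \<Longrightarrow> (\<lambda>\<omega>. A \<omega> v l u m) \<in> borel_measurable M'"
    and b: "\<And>v l. v < N \<Longrightarrow> l < L v \<Longrightarrow> (\<lambda>\<omega>. b \<omega> v l) \<in> borel_measurable M'"
    and th: "\<And>v l. (\<lambda>\<omega>. \<theta> \<omega> v l) \<in> borel_measurable M'"
  shows "w \<le> N \<Longrightarrow> (\<lambda>\<omega>. gs_partial N L (A \<omega>) (b \<omega>) \<alpha> (\<theta> \<omega>) w v l) \<in> borel_measurable M'"
proof (induction w arbitrary: v l)
  case 0 then show ?case using th by simp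
next
  case (Suc w)
  have z: "\<And>v l. (\<lambda>\<omega>. gs_partial N L (A \<omega>) (b \<omega>) \<alpha> (\<theta> \<omega>) w v l) \<in> borel_measurable M'"
    using Suc by simp
  have w: "w < N" using Suc by simp
  have q: "(\<lambda>\<omega>. qgrad N L (A \<omega>) (b \<omega>) (gs_partial N L (A \<omega>) (b \<omega>) \<alpha> (\<theta> \<omega>) w) w l) \<in> borel_measurable M'"
    if l: "l < L w" for l
    unfolding qgrad_def using A[OF w l] b[OF w l] z
    by (intro borel_measurable_add borel_measurable_sum borel_measurable_times) auto
  show ?case
  proof (cases "v = w")
    case True
    show ?thesis
    proof (cases "l < L w")
      case True
      then show ?thesis using \<open>v = w\<close> q[OF True] z
        by (simp add: Let_def)
    next
      case False
      then show ?thesis using \<open>v = w\<close> z by (simp add: Let_def)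
    qed
  next
    case False
    then show ?thesis using z by (simp add: Let_def)
  qed
qed

context
  fixes N :: nat and W :: "nat \<Rightarrow> nat \<Rightarrow> real" and Xs :: "nat \<Rightarrow> 'a measure"
    and k :: "nat \<Rightarrow> 'a \<Rightarrow> 'a \<Rightarrow> real" and x :: "nat \<Rightarrow> nat \<Rightarrow> 'a" and L :: "nat \<Rightarrow> nat"
    and lam gam :: real and npre npost :: nat
  assumes kmeas: "\<forall>v<N. (\<lambda>(a, b). k v a b) \<in> borel_measurable (Xs v \<Otimes>\<^sub>M Xs v)"
    and dict: "\<forall>v<N. \<forall>l<L v. x v l \<in> space (Xs v)"
begin

lemma At_meas:
  assumes Y: "\<And>i. i < npre \<Longrightarrow> ypre t i \<in> measurable M' (PiM {..<N} Xs)"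
    and "v < N" "l < L v" "u < N" "m < L u"
  shows "(\<lambda>\<omega>. At N W k x lam gam npre ypre t \<omega> v l u m) \<in> borel_measurable M'"
proof -
  have f: "\<And>i v l. i < npre \<Longrightarrow> v < N \<Longrightarrow> l < L v \<Longrightarrow> (\<lambda>\<omega>. feat k x v (ypre t i \<omega>) l) \<in> borel_measurable M'"
    using feat_meas[OF Y] kmeas dict by blast
  show ?thesis
  proof (cases "v = u")
    case True
    then show ?thesis
      unfolding At_def Amat_def prewin_avg using assms f
      by simp
  next
    case False
    then show ?thesis
      unfolding At_def Amat_def prewin_avg using assms f by simp
  qed
qed

lemma bt_meas:
  assumes Y: "\<And>i. i < npre \<Longrightarrow> ypre t i \<in> measurable M' (PiM {..<N} Xs)"
    and Z: "\<And>s. max 1 (t - npost) \<le> s \<Longrightarrow> s \<le> t \<Longrightarrow> ystr s \<in> measurable M' (PiM {..<N} Xs)"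
    and "v < N" "l < L v"
  shows "(\<lambda>\<omega>. bt k x npre npost ypre ystr t \<omega> v l) \<in> borel_measurable M'"
proof -
  have f: "(\<lambda>\<omega>. feat k x v (ypre t i \<omega>) l) \<in> borel_measurable M'" if "i < npre" for i
    using feat_meas[OF Y[OF that]] kmeas dict assms by blast
  have g: "(\<lambda>\<omega>. feat k x v (ystr s \<omega>) l) \<in> borel_measurable M'" if "s \<in> {max 1 (t - npost)..<Suc t}" for s
    using feat_meas[OF Z] kmeas dict assms that by auto
  show ?thesis
    unfolding bt_def bvec_def prewin_avg postwin_avg using f g
    by (intro borel_measurable_diff borel_measurable_sum borel_measurable_divide borel_measurable_const) auto
qed

lemma theta_meas:
  assumes Y: "\<And>t i. 1 \<le> t \<Longrightarrow> t < T \<Longrightarrow> i < npre \<Longrightarrow> ypre t i \<in> measurable M' (PiM {..<N} Xs)"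
    and Z: "\<And>s. 1 \<le> s \<Longrightarrow> s < T \<Longrightarrow> ystr s \<in> measurable M' (PiM {..<N} Xs)"
  shows "(\<lambda>\<omega>. theta N W k x L lam gam npre npost ypre ystr c th1 T \<omega> v l) \<in> borel_measurable M'"
  using Y Z
proof (induction T arbitrary: v l)
  case 0 then show ?case by simp
next
  case (Suc t)
  show ?case
  proof (cases "t = 0")
    case True then show ?thesis by simp
  next
    case False
    have IH: "\<And>v l. (\<lambda>\<omega>. theta N W k x L lam gam npre npost ypre ystr c th1 t \<omega> v l) \<in> borel_measurable M'"
      using Suc.prems by (intro Suc.IH) auto
    have A: "\<And>v l u m. v < N \<Longrightarrow> l < L v \<Longrightarrow> u < N \<Longrightarrow> m < L u \<Longrightarrow>
        (\<lambda>\<omega>. At N W k x lam gam npre ypre t \<omega> v l u m) \<in> borel_measurable M'"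
      using False Suc.prems by (intro At_meas) auto
    have b: "\<And>v l. v < N \<Longrightarrow> l < L v \<Longrightarrow> (\<lambda>\<omega>. bt k x npre npost ypre ystr t \<omega> v l) \<in> borel_measurable M'"
      using False Suc.prems by (intro bt_meas) auto
    show ?thesis using False gs_meas[OF A b IH, where w=N and \<alpha>="c / real t"] by simp
  qed
qed

end

lemma avg_abs_bound:
  assumes "\<And>y. y \<in> set xs \<Longrightarrow> \<bar>f y\<bar> \<le> B" and "0 \<le> B"
  shows "\<bar>avg xs f\<bar> \<le> B"
proof (cases "xs = []")
  case True then show ?thesis using assms by (simp add: avg_def)
next
  case False
  have "\<bar>sum_list (map f xs)\<bar> \<le> sum_list (map abs (map f xs))"
    by (rule sum_list_abs)
  also have "\<dots> = sum_list (map (\<lambda>y. \<bar>f y\<bar>) xs)" by (simp only: map_map o_def)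
  also have "\<dots> \<le> sum_list (map (\<lambda>y. B) xs)"
    using assms(1) by (intro sum_list_mono) auto
  also have "\<dots> = real (length xs) * B" by (simp add: sum_list_triv)
  finally have "\<bar>sum_list (map f xs)\<bar> \<le> real (length xs) * B" .
  then show ?thesis using False unfolding avg_def
    by (simp add: divide_le_eq mult.commute)
qed

locale setting =
  fixes \<M> :: "'m measure"
    and N :: nat and W :: "nat \<Rightarrow> nat \<Rightarrow> real"
    and Xs :: "nat \<Rightarrow> 'a measure" and P :: "(nat \<Rightarrow> 'a) measure"
    and k :: "nat \<Rightarrow> 'a \<Rightarrow> 'a \<Rightarrow> real" and Mb :: "nat \<Rightarrow> real"
    and x :: "nat \<Rightarrow> nat \<Rightarrow> 'a" and L :: "nat \<Rightarrow> nat"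
    and lam gam c \<rho> :: real and npre npost :: nat
    and ypre :: "nat \<Rightarrow> nat \<Rightarrow> 'm \<Rightarrow> (nat \<Rightarrow> 'a)"
    and ystr :: "nat \<Rightarrow> 'm \<Rightarrow> (nat \<Rightarrow> 'a)"
    and th1 :: "nat \<Rightarrow> nat \<Rightarrow> real" and \<sigma>t :: "nat \<Rightarrow> real"
  assumes M: "prob_space \<M>"
    and N: "0 < N"
    and W_nonneg: "\<forall>u<N. \<forall>v<N. 0 \<le> W u v"
    and W_sym: "\<forall>u<N. \<forall>v<N. W u v = W v u"
    and W_diag: "\<forall>v<N. W v v = 0"
    and kern: "\<forall>v<N. reproducing_kernel (space (Xs v)) (k v)"
    and sep: "\<forall>v<N. rkhs_separable (space (Xs v)) (k v)"
    and bnd: "\<forall>v<N. \<forall>a\<in>space (Xs v). \<forall>b\<in>space (Xs v). k v a b \<le> Mb v"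
    and kmeas: "\<forall>v<N. (\<lambda>(a, b). k v a b) \<in> borel_measurable (Xs v \<Otimes>\<^sub>M Xs v)"
    and dict: "\<forall>v<N. \<forall>l<L v. x v l \<in> space (Xs v)"
    \<comment> \<open>data under the null p = p': all observations i.i.d. with law P; in particular
        Assumption 2 (independence in time)\<close>
    and indep: "prob_space.indep_vars \<M> (\<lambda>_. PiM {..<N} Xs) (obs_family ypre ystr) (obs_index npre)"
    and distrP: "\<forall>j\<in>obs_index npre. distr \<M> (PiM {..<N} Xs) (obs_family ypre ystr j) = P"
    and npre: "0 < npre"
    and lam: "0 \<le> lam" and gam: "0 < gam"
    and c: "0 < c" and cC: "c * Cmax N W P k x L Mb lam gam < 1"
    and rho: "0 < \<rho>"
    and bnded: "\<forall>t\<ge>1. AE \<omega> in \<M>.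
                    thnorm N L (theta N W k x L lam gam npre npost ypre ystr c th1 t \<omega>) \<le> \<rho>"
    and sigma: "\<forall>t\<ge>1. \<forall>v<N.
                  integral\<^sup>L \<M> (delta_sq \<M> N W k x L lam gam npre npost ypre ystr c th1 t v) \<le> (\<sigma>t t)\<^sup>2"
    and sigma_fin: "bdd_above (\<sigma>t ` {1..})"


begin

sublocale prob_space \<M> by (rule M)

abbreviation th where "th t \<omega> \<equiv> theta N W k x L lam gam npre npost ypre ystr c th1 t \<omega>"
abbreviation btt where "btt t \<omega> \<equiv> bt k x npre npost ypre ystr t \<omega>"
abbreviation Att where "Att t \<omega> \<equiv> At N W k x lam gam npre ypre t \<omega>"

definition "K0 = (\<Sum>v<N. \<bar>Mb v\<bar>)"
definition "GW = (\<Sum>v<N. \<bar>gdeg N W v\<bar>) + (\<Sum>v<N. \<Sum>u<N. \<bar>W v u\<bar>)"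
definition "KA = K0 * K0 + lam * (K0 * GW * K0) + gam"
definition "KB = 2 * K0"
definition "Qc = ltot N L * KA * zb (ltot N L * KA) c KB \<rho> N + KB"
definition "K1 = ltot N L * (2 * \<rho> * (ltot N L * KA) * Qc + Qc\<^sup>2)"

lemma K0_nonneg: "0 \<le> K0" unfolding K0_def by (simp add: sum_nonneg)
lemma GW_nonneg: "0 \<le> GW" unfolding GW_def by (intro sum_nonneg add_nonneg_nonneg) auto
lemma KA_nonneg: "0 \<le> KA" unfolding KA_def using K0_nonneg GW_nonneg lam gam by simp
lemma KB_nonneg: "0 \<le> KB" unfolding KB_def using K0_nonneg by simp
lemma Qc_nonneg: "0 \<le> Qc"
  unfolding Qc_def using zb_nonneg[of "ltot N L * KA" c KB \<rho> N] KA_nonneg KB_nonneg ltot_nonneg c rho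
  by simp
lemma K1_nonneg: "0 \<le> K1"
  unfolding K1_def using Qc_nonneg KA_nonneg ltot_nonneg rho by simp

lemma obs_meas: "j \<in> obs_index npre \<Longrightarrow> obs_family ypre ystr j \<in> measurable \<M> (PiM {..<N} Xs)"
  using indep unfolding indep_vars_def by auto

lemma ypre_meas: "1 \<le> t \<Longrightarrow> i < npre \<Longrightarrow> ypre t i \<in> measurable \<M> (PiM {..<N} Xs)"
  using obs_meas[of "Inl (t, i)"] by (simp add: obs_family_def obs_index_def)

lemma ystr_meas: "1 \<le> s \<Longrightarrow> ystr s \<in> measurable \<M> (PiM {..<N} Xs)"
  using obs_meas[of "Inr s"] by (simp add: obs_family_def obs_index_def)

lemma th_meas: "(\<lambda>\<omega>. th t \<omega> v l) \<in> borel_measurable \<M>"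
  by (rule theta_meas[OF kmeas dict]) (auto intro: ypre_meas ystr_meas)

lemma btt_meas: "1 \<le> t \<Longrightarrow> v < N \<Longrightarrow> l < L v \<Longrightarrow> (\<lambda>\<omega>. btt t \<omega> v l) \<in> borel_measurable \<M>"
  by (rule bt_meas[OF kmeas dict]) (auto intro: ypre_meas ystr_meas)

lemma feat_bnd:
  assumes y: "y \<in> space (PiM {..<N} Xs)" and v: "v < N" and l: "l < L v"
  shows "\<bar>feat k x v y l\<bar> \<le> K0"
proof -
  have yv: "y v \<in> space (Xs v)" using y v by (auto simp: space_PiM PiE_iff)
  have "\<bar>k v (y v) (x v l)\<bar> \<le> Mb v"
  proof (rule kernel_abs_bound[of "space (Xs v)" "k v" "y v" "x v l" "Mb v"])
    show "reproducing_kernel (space (Xs v)) (k v)" using kern v by simp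
    show "y v \<in> space (Xs v)" by (rule yv)
    show "x v l \<in> space (Xs v)" using dict v l by simp
    show "\<forall>p\<in>space (Xs v). \<forall>q\<in>space (Xs v). k v p q \<le> Mb v" using bnd v by simp
  qed
  also have "\<dots> \<le> \<bar>Mb v\<bar>" by simp
  also have "\<dots> \<le> K0" unfolding K0_def using v by (intro member_le_sum) auto
  finally show ?thesis unfolding feat_def .
qed

lemma ypre_space: "\<omega> \<in> space \<M> \<Longrightarrow> 1 \<le> t \<Longrightarrow> i < npre \<Longrightarrow> ypre t i \<omega> \<in> space (PiM {..<N} Xs)"
  by (rule measurable_space[OF ypre_meas])

lemma ystr_space: "\<omega> \<in> space \<M> \<Longrightarrow> 1 \<le> s \<Longrightarrow> ystr s \<omega> \<in> space (PiM {..<N} Xs)"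
  by (rule measurable_space[OF ystr_meas])

lemma glap_bnd: "v < N \<Longrightarrow> u < N \<Longrightarrow> \<bar>glap N W v u\<bar> \<le> GW"
proof -
  assume v: "v < N" and u: "u < N"
  have "\<bar>glap N W v u\<bar> \<le> \<bar>gdeg N W u\<bar> + \<bar>W v u\<bar>"
    unfolding glap_def by (auto simp: abs_if)
  also have "\<bar>gdeg N W u\<bar> \<le> (\<Sum>v<N. \<bar>gdeg N W v\<bar>)"
    using u by (intro member_le_sum) auto
  also have "\<bar>W v u\<bar> \<le> (\<Sum>u'<N. \<bar>W v u'\<bar>)" using u by (intro member_le_sum) auto
  also have "(\<Sum>u'<N. \<bar>W v u'\<bar>) \<le> (\<Sum>v<N. \<Sum>u<N. \<bar>W v u\<bar>)"
    using v by (intro member_le_sum[of v "{..<N}" "\<lambda>v. \<Sum>u<N. \<bar>W v u\<bar>"]) (auto intro: sum_nonneg)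
  finally show ?thesis unfolding GW_def by simp
qed

lemma Att_bnd:
  assumes \<omega>: "\<omega> \<in> space \<M>" and t: "1 \<le> t" and r: "v < N" "l < L v" "u < N" "m < L u"
  shows "\<bar>Att t \<omega> v l u m\<bar> \<le> KA"
proof -
  have fy: "\<And>y v l. y \<in> set (prewin npre ypre t \<omega>) \<Longrightarrow> v < N \<Longrightarrow> l < L v \<Longrightarrow> \<bar>feat k x v y l\<bar> \<le> K0"
    using ypre_space[OF \<omega> t] feat_bnd unfolding prewin_def by auto
  have K00: "0 \<le> K0" by (rule K0_nonneg)
  have "\<bar>avg (prewin npre ypre t \<omega>) (\<lambda>y. (if v = u then feat k x v y l * feat k x v y m else 0)
                 + lam * (feat k x v y l * glap N W v u * feat k x u y m))\<bar> \<le> K0 * K0 + lam * (K0 * GW * K0)"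
  proof (rule avg_abs_bound)
    fix y assume y: "y \<in> set (prewin npre ypre t \<omega>)"
    have a: "\<bar>feat k x v y l\<bar> \<le> K0" "\<bar>feat k x u y m\<bar> \<le> K0" using fy[OF y] r by auto
    have a2: "\<bar>feat k x v y m\<bar> \<le> K0" if "v = u" using fy[OF y] r that by auto
    have g: "\<bar>glap N W v u\<bar> \<le> GW" using glap_bnd r by auto
    have "\<bar>if v = u then feat k x v y l * feat k x v y m else 0\<bar> \<le> K0 * K0"
      using a a2 K00 by (auto simp: abs_mult intro: mult_mono)
    moreover have "\<bar>feat k x v y l * glap N W v u * feat k x u y m\<bar> \<le> K0 * GW * K0"
      unfolding abs_mult using a g K00 GW_nonneg by (intro mult_mono) auto
    moreover have "\<bar>lam * (feat k x v y l * glap N W v u * feat k x u y m)\<bar>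
        = lam * \<bar>feat k x v y l * glap N W v u * feat k x u y m\<bar>" using lam by (simp add: abs_mult)
    moreover have "lam * \<bar>feat k x v y l * glap N W v u * feat k x u y m\<bar> \<le> lam * (K0 * GW * K0)"
      using lam calculation(2) by (rule mult_left_mono[rotated])
    ultimately show "\<bar>(if v = u then feat k x v y l * feat k x v y m else 0)
                 + lam * (feat k x v y l * glap N W v u * feat k x u y m)\<bar> \<le> K0 * K0 + lam * (K0 * GW * K0)"
      by (smt (verit) abs_triangle_ineq)
  qed (use K00 GW_nonneg lam in simp)
  then show ?thesis unfolding At_def Amat_def KA_def using gam
    by (auto simp: abs_if split: if_splits)
qed

lemma btt_bnd:
  assumes \<omega>: "\<omega> \<in> space \<M>" and t: "1 \<le> t" and r: "v < N" "l < L v"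
  shows "\<bar>btt t \<omega> v l\<bar> \<le> KB"
proof -
  have "\<bar>avg (prewin npre ypre t \<omega>) (\<lambda>y. feat k x v y l)\<bar> \<le> K0"
    using ypre_space[OF \<omega> t] feat_bnd r K0_nonneg unfolding prewin_def by (intro avg_abs_bound) auto
  moreover have "\<bar>avg (postwin npost ystr t \<omega>) (\<lambda>y. feat k x v y l)\<bar> \<le> K0"
    using ystr_space[OF \<omega>] feat_bnd r K0_nonneg unfolding postwin_def by (intro avg_abs_bound) auto
  ultimately show ?thesis unfolding bt_def bvec_def KB_def by linarith
qed

lemma bounded_all: "AE \<omega> in \<M>. \<forall>t. 1 \<le> t \<longrightarrow> thnorm N L (th t \<omega>) \<le> \<rho>"
proof (subst AE_all_countable, intro allI)
  fix t :: nat
  show "AE \<omega> in \<M>. 1 \<le> t \<longrightarrow> thnorm N L (th t \<omega>) \<le> \<rho>"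
    by (intro AE_impI) (use bnded in simp)
qed

lemma thnorm_coords:
  assumes "thnorm N L \<theta> \<le> \<rho>"
  shows "\<forall>u<N. \<forall>m<L u. \<bar>\<theta> u m\<bar> \<le> \<rho>" and "ns N L \<theta> \<le> \<rho>\<^sup>2"
proof -
  have ns0: "0 \<le> ns N L \<theta>" unfolding ns_def by (intro sum_nonneg) auto
  have "sqrt (ns N L \<theta>) \<le> \<rho>" using assms unfolding thnorm_def ns_def .
  then show nsb: "ns N L \<theta> \<le> \<rho>\<^sup>2" by (rule sqrt_le_D)
  show "\<forall>u<N. \<forall>m<L u. \<bar>\<theta> u m\<bar> \<le> \<rho>"
  proof (intro allI impI)
    fix u m assume u: "u < N" and m: "m < L u"
    have "(\<theta> u m)\<^sup>2 \<le> (\<Sum>m'<L u. (\<theta> u m')\<^sup>2)" using m by (intro member_le_sum) auto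
    also have "\<dots> \<le> ns N L \<theta>" unfolding ns_def using u
      by (intro member_le_sum[of u "{..<N}" "\<lambda>u. \<Sum>m'<L u. (\<theta> u m')\<^sup>2"]) (auto intro: sum_nonneg)
    finally have "(\<theta> u m)\<^sup>2 \<le> \<rho>\<^sup>2" using nsb by linarith
    then have sq: "\<bar>\<theta> u m\<bar>\<^sup>2 \<le> \<rho>\<^sup>2" by simp
    then show "\<bar>\<theta> u m\<bar> \<le> \<rho>" using power2_le_imp_le[OF sq] rho by simp
  qed
qed

end

context setting begin

lemma alpha_le: "1 \<le> t \<Longrightarrow> c / real t \<le> c"
  using c by (simp add: divide_le_eq)

lemma ip_qgrad: "ip N L \<theta> (qgrad N L A b \<theta>) = ip N L \<theta> (\<lambda>v l. \<Sum>u<N. \<Sum>m<L u. A v l u m * \<theta> u m) + ip N L \<theta> b"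
  unfolding ip_def qgrad_def by (simp add: distrib_left sum.distrib)

lemma step_pt:
  assumes \<omega>: "\<omega> \<in> space \<M>" and bd: "\<forall>t. 1 \<le> t \<longrightarrow> thnorm N L (th t \<omega>) \<le> \<rho>" and t: "1 \<le> t"
  shows "\<forall>v<N. \<forall>l<L v. \<bar>th (Suc t) \<omega> v l - th t \<omega> v l\<bar> \<le> c / real t * Qc"
    and "ns N L (th (Suc t) \<omega>) \<le> (1 - 2 * (c / real t) * gam) * ns N L (th t \<omega>)
           - 2 * (c / real t) * ip N L (th t \<omega>) (btt t \<omega>) + (c / real t)\<^sup>2 * K1"
proof -
  define \<alpha> where "\<alpha> = c / real t"
  have eq: "th (Suc t) \<omega> = gs_partial N L (Att t \<omega>) (btt t \<omega>) \<alpha> (th t \<omega>) N"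
    using t by (simp add: \<alpha>_def)
  have A: "\<forall>v<N. \<forall>l<L v. \<forall>u<N. \<forall>m<L u. \<bar>Att t \<omega> v l u m\<bar> \<le> KA"
    using Att_bnd[OF \<omega> t] by blast
  have b: "\<forall>v<N. \<forall>l<L v. \<bar>btt t \<omega> v l\<bar> \<le> KB"
    using btt_bnd[OF \<omega> t] by blast
  have thb: "\<forall>u<N. \<forall>m<L u. \<bar>th t \<omega> u m\<bar> \<le> \<rho>"
    using thnorm_coords(1) bd t by blast
  have al: "0 \<le> \<alpha>" "\<alpha> \<le> c" using c alpha_le[OF t] by (auto simp: \<alpha>_def)
  have r0: "0 \<le> \<rho>" using rho by simp
  note S = step_ineq[OF A b thb KA_nonneg KB_nonneg r0 al]
  show "\<forall>v<N. \<forall>l<L v. \<bar>th (Suc t) \<omega> v l - th t \<omega> v l\<bar> \<le> c / real t * Qc"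
  proof (intro allI impI)
    fix v l assume v: "v < N" and l: "l < L v"
    from S(1) v l obtain q where q: "th (Suc t) \<omega> v l = th t \<omega> v l - \<alpha> * q" "\<bar>q\<bar> \<le> Qc"
      unfolding eq Qc_def by blast
    have "\<bar>th (Suc t) \<omega> v l - th t \<omega> v l\<bar> = \<alpha> * \<bar>q\<bar>" using q(1) al by (simp add: abs_mult)
    also have "\<dots> \<le> \<alpha> * Qc" by (rule mult_left_mono[OF q(2) al(1)])
    finally show "\<bar>th (Suc t) \<omega> v l - th t \<omega> v l\<bar> \<le> c / real t * Qc" by (simp add: \<alpha>_def)
  qed
  have S2: "ns N L (th (Suc t) \<omega>) \<le> ns N L (th t \<omega>) - 2 * \<alpha> * ip N L (th t \<omega>) (qgrad N L (Att t \<omega>) (btt t \<omega>) (th t \<omega>))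
            + \<alpha>\<^sup>2 * K1"
    using S(2) unfolding eq K1_def Qc_def .
  have psd: "gam * ns N L (th t \<omega>) \<le> ip N L (th t \<omega>) (\<lambda>v l. \<Sum>u<N. \<Sum>m<L u. Att t \<omega> v l u m * th t \<omega> u m)"
    unfolding At_def by (rule amat_psd[OF W_nonneg W_sym lam])
  have "gam * ns N L (th t \<omega>) + ip N L (th t \<omega>) (btt t \<omega>)
      \<le> ip N L (th t \<omega>) (qgrad N L (Att t \<omega>) (btt t \<omega>) (th t \<omega>))"
    unfolding ip_qgrad using psd by simp
  then have "2 * \<alpha> * (gam * ns N L (th t \<omega>) + ip N L (th t \<omega>) (btt t \<omega>))
      \<le> 2 * \<alpha> * ip N L (th t \<omega>) (qgrad N L (Att t \<omega>) (btt t \<omega>) (th t \<omega>))"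
    using al by (intro mult_left_mono) auto
  then show "ns N L (th (Suc t) \<omega>) \<le> (1 - 2 * (c / real t) * gam) * ns N L (th t \<omega>)
           - 2 * (c / real t) * ip N L (th t \<omega>) (btt t \<omega>) + (c / real t)\<^sup>2 * K1"
    using S2 unfolding \<alpha>_def by (simp add: algebra_simps)
qed

lemma drift:
  assumes \<omega>: "\<omega> \<in> space \<M>" and bd: "\<forall>t. 1 \<le> t \<longrightarrow> thnorm N L (th t \<omega>) \<le> \<rho>" and s: "1 \<le> s"
    and v: "v < N" and l: "l < L v"
  shows "\<bar>th (s + n) \<omega> v l - th s \<omega> v l\<bar> \<le> real n * (c / real s * Qc)"
proof (induction n)
  case 0 then show ?case by simp
next
  case (Suc n)
  have st: "1 \<le> s + n" using s by simp
  have "\<bar>th (Suc (s + n)) \<omega> v l - th (s + n) \<omega> v l\<bar> \<le> c / real (s + n) * Qc"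
    using step_pt(1)[OF \<omega> bd st] v l by blast
  also have "\<dots> \<le> c / real s * Qc"
    using c s Qc_nonneg by (intro mult_right_mono divide_left_mono) auto
  finally have d1: "\<bar>th (Suc (s + n)) \<omega> v l - th (s + n) \<omega> v l\<bar> \<le> c / real s * Qc" .
  have e: "s + Suc n = Suc (s + n)" by simp
  have tri: "\<bar>th (Suc (s + n)) \<omega> v l - th s \<omega> v l\<bar>
     \<le> \<bar>th (Suc (s + n)) \<omega> v l - th (s + n) \<omega> v l\<bar> + \<bar>th (s + n) \<omega> v l - th s \<omega> v l\<bar>"
    by arith
  have r: "real (Suc n) * (c / real s * Qc) = c / real s * Qc + real n * (c / real s * Qc)"
    by (simp only: of_nat_Suc distrib_right mult_1 add.commute)
  show ?case unfolding e r using tri d1 Suc.IH by linarith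
qed

end

context setting begin

lemma th_int:
  assumes t: "1 \<le> t" and v: "v < N" and l: "l < L v"
  shows "integrable \<M> (\<lambda>\<omega>. th t \<omega> v l)"
proof (rule integrable_const_bound[where B=\<rho>])
  show "AE \<omega> in \<M>. norm (th t \<omega> v l) \<le> \<rho>"
    using bounded_all
  proof eventually_elim
    case (elim \<omega>)
    then show ?case using thnorm_coords(1)[of "th t \<omega>"] t v l by auto
  qed
  show "(\<lambda>\<omega>. th t \<omega> v l) \<in> borel_measurable \<M>" by (rule th_meas)
qed

lemma ns_nonneg: "0 \<le> ns N L \<theta>" unfolding ns_def by (intro sum_nonneg) auto

lemma ns_meas: "(\<lambda>\<omega>. ns N L (th t \<omega>)) \<in> borel_measurable \<M>"
  unfolding ns_def by (intro borel_measurable_sum borel_measurable_power th_meas)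

lemma ns_int:
  assumes t: "1 \<le> t"
  shows "integrable \<M> (\<lambda>\<omega>. ns N L (th t \<omega>))"
proof (rule integrable_const_bound[where B="\<rho>\<^sup>2"])
  show "AE \<omega> in \<M>. norm (ns N L (th t \<omega>)) \<le> \<rho>\<^sup>2"
    using bounded_all
  proof eventually_elim
    case (elim \<omega>)
    then show ?case using thnorm_coords(2)[of "th t \<omega>"] t ns_nonneg[of "th t \<omega>"] by auto
  qed
  show "(\<lambda>\<omega>. ns N L (th t \<omega>)) \<in> borel_measurable \<M>" by (rule ns_meas)
qed

lemma prod_int:
  assumes s: "1 \<le> s" and t: "1 \<le> t" and v: "v < N" and l: "l < L v"
  shows "integrable \<M> (\<lambda>\<omega>. th s \<omega> v l * btt t \<omega> v l)"
proof (rule integrable_const_bound[where B="\<rho> * KB"])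
  show "AE \<omega> in \<M>. norm (th s \<omega> v l * btt t \<omega> v l) \<le> \<rho> * KB"
    using bounded_all AE_space
  proof eventually_elim
    case (elim \<omega>)
    have a: "\<bar>th s \<omega> v l\<bar> \<le> \<rho>" using thnorm_coords(1)[of "th s \<omega>"] elim s v l by auto
    have b: "\<bar>btt t \<omega> v l\<bar> \<le> KB" using btt_bnd[of \<omega> t v l] elim t v l by auto
    show ?case unfolding real_norm_def abs_mult using a b by (intro mult_mono) auto
  qed
  show "(\<lambda>\<omega>. th s \<omega> v l * btt t \<omega> v l) \<in> borel_measurable \<M>"
    using th_meas btt_meas[OF t v l] by (rule borel_measurable_times)
qed

lemma btt_int:
  assumes t: "1 \<le> t" and v: "v < N" and l: "l < L v"
  shows "integrable \<M> (\<lambda>\<omega>. btt t \<omega> v l)"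
proof (rule integrable_const_bound[where B="KB"])
  show "AE \<omega> in \<M>. norm (btt t \<omega> v l) \<le> KB"
    using btt_bnd[of _ t v l] t v l by (intro AE_I2) auto
  show "(\<lambda>\<omega>. btt t \<omega> v l) \<in> borel_measurable \<M>" by (rule btt_meas[OF t v l])
qed

lemma ip_int:
  assumes s: "1 \<le> s" and t: "1 \<le> t"
  shows "integrable \<M> (\<lambda>\<omega>. ip N L (th s \<omega>) (btt t \<omega>))"
  unfolding ip_def
  by (auto intro!: integrable_sum prod_int[OF s t])

lemma Ebt0:
  assumes t: "1 \<le> t" and v: "v < N" and l: "l < L v"
  shows "(\<integral>\<omega>. btt t \<omega> v l \<partial>\<M>) = 0"
proof -
  define f where "f = (\<lambda>y. feat k x v y l)"
  have km: "(\<lambda>(a, b). k v a b) \<in> borel_measurable (Xs v \<Otimes>\<^sub>M Xs v)" using kmeas v by simp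
  have xv: "x v l \<in> space (Xs v)" using dict v l by simp
  have fm: "f \<in> borel_measurable (PiM {..<N} Xs)"
    unfolding f_def
    by (rule feat_meas[where Y="\<lambda>y. y" and k=k and x=x and v=v and l=l and N=N and Xs=Xs, simplified])
      (auto intro: v xv km measurable_ident_sets)
  define \<mu> where "\<mu> = integral\<^sup>L P f"
  have Eobs: "(\<integral>\<omega>. f (obs_family ypre ystr j \<omega>) \<partial>\<M>) = \<mu>" if j: "j \<in> obs_index npre" for j
    using integral_distr[OF obs_meas[OF j] fm] distrP j by (simp add: \<mu>_def)
  have Epre: "(\<integral>\<omega>. f (ypre t i \<omega>) \<partial>\<M>) = \<mu>" if "i < npre" for i
    using Eobs[of "Inl (t, i)"] t that by (simp add: obs_family_def obs_index_def)
  have Estr: "(\<integral>\<omega>. f (ystr s \<omega>) \<partial>\<M>) = \<mu>" if "1 \<le> s" for s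
    using Eobs[of "Inr s"] that by (simp add: obs_family_def obs_index_def)
  have ipre: "integrable \<M> (\<lambda>\<omega>. f (ypre t i \<omega>))" if i: "i < npre" for i
  proof (rule integrable_const_bound[where B=K0])
    show "AE \<omega> in \<M>. norm (f (ypre t i \<omega>)) \<le> K0"
      using feat_bnd[OF ypre_space[OF _ t i] v l] unfolding f_def by (intro AE_I2) auto
    show "(\<lambda>\<omega>. f (ypre t i \<omega>)) \<in> borel_measurable \<M>"
      unfolding f_def by (rule feat_meas[where k=k and x=x and v=v and l=l, OF ypre_meas[OF t i] v xv km])
  qed
  have istr: "integrable \<M> (\<lambda>\<omega>. f (ystr s \<omega>))" if s: "1 \<le> s" for s
  proof (rule integrable_const_bound[where B=K0])
    show "AE \<omega> in \<M>. norm (f (ystr s \<omega>)) \<le> K0"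
      using feat_bnd[OF ystr_space[OF _ s] v l] unfolding f_def by (intro AE_I2) auto
    show "(\<lambda>\<omega>. f (ystr s \<omega>)) \<in> borel_measurable \<M>"
      unfolding f_def by (rule feat_meas[where k=k and x=x and v=v and l=l, OF ystr_meas[OF s] v xv km])
  qed
  define S where "S = {max 1 (t - npost)..<Suc t}"
  define n where "n = Suc t - max 1 (t - npost)"
  have n0: "0 < n" unfolding n_def using t by simp
  have S1: "\<And>s. s \<in> S \<Longrightarrow> 1 \<le> s" unfolding S_def by auto
  have cS: "card S = n" unfolding S_def n_def by simp
  have eq: "(\<lambda>\<omega>. btt t \<omega> v l) = (\<lambda>\<omega>. (\<Sum>i\<in>{0..<npre}. f (ypre t i \<omega>)) / real npre
        - (\<Sum>s\<in>S. f (ystr s \<omega>)) / real n)"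
    unfolding bt_def bvec_def prewin_avg postwin_avg f_def S_def n_def ..
  have i1: "integrable \<M> (\<lambda>\<omega>. (\<Sum>i\<in>{0..<npre}. f (ypre t i \<omega>)) / real npre)"
    using ipre by (intro integrable_divide_zero integrable_sum) auto
  have i2: "integrable \<M> (\<lambda>\<omega>. (\<Sum>s\<in>S. f (ystr s \<omega>)) / real n)"
    using istr S1 by (intro integrable_divide_zero integrable_sum) auto
  have "(\<integral>\<omega>. btt t \<omega> v l \<partial>\<M>) = (\<Sum>i\<in>{0..<npre}. \<integral>\<omega>. f (ypre t i \<omega>) \<partial>\<M>) / real npre
       - (\<Sum>s\<in>S. \<integral>\<omega>. f (ystr s \<omega>) \<partial>\<M>) / real n"
    unfolding eq using i1 i2 ipre istr S1 by (simp add: integral_sum)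
  also have "\<dots> = (\<Sum>i\<in>{0..<npre}. \<mu>) / real npre - (\<Sum>s\<in>S. \<mu>) / real n"
    using Epre Estr S1 by simp
  also have "\<dots> = 0" using npre n0 cS by simp
  finally show ?thesis .
qed

end

context setting begin

lemma indep_prod:
  assumes s: "1 \<le> s" and st: "s + npost \<le> t" and v: "v < N" and l: "l < L v"
  shows "(\<integral>\<omega>. th s \<omega> v l * btt t \<omega> v l \<partial>\<M>) = (\<integral>\<omega>. th s \<omega> v l \<partial>\<M>) * (\<integral>\<omega>. btt t \<omega> v l \<partial>\<M>)"
proof -
  have t: "1 \<le> t" using s st by simp
  define J1 where "J1 = {Inl (t', i) | t' i. 1 \<le> t' \<and> t' < s \<and> i < npre} \<union> {Inr s' | s'. 1 \<le> s' \<and> s' < s}"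
  define J2 where "J2 = {Inl (t, i) | i. i < npre} \<union> {Inr s' | s'. max 1 (t - npost) \<le> s' \<and> s' \<le> t}"
  have sub1: "J1 \<subseteq> obs_index npre" unfolding J1_def obs_index_def by auto
  have sub2: "J2 \<subseteq> obs_index npre" unfolding J2_def obs_index_def using t by auto
  have disj: "J1 \<inter> J2 = {}" unfolding J1_def J2_def using st by auto
  let ?X1 = "\<lambda>\<omega>. restrict (\<lambda>j. obs_family ypre ystr j \<omega>) J1"
  let ?X2 = "\<lambda>\<omega>. restrict (\<lambda>j. obs_family ypre ystr j \<omega>) J2"
  have iv: "indep_var (PiM J1 (\<lambda>_. PiM {..<N} Xs)) ?X1 (PiM J2 (\<lambda>_. PiM {..<N} Xs)) ?X2"
    by (rule indep_var_restrict[OF indep disj sub1 sub2])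
  define pre' :: "nat \<Rightarrow> nat \<Rightarrow> ((nat \<times> nat) + nat \<Rightarrow> nat \<Rightarrow> 'a) \<Rightarrow> nat \<Rightarrow> 'a"
    where "pre' = (\<lambda>t' i f. f (Inl (t', i)))"
  define str' :: "nat \<Rightarrow> ((nat \<times> nat) + nat \<Rightarrow> nat \<Rightarrow> 'a) \<Rightarrow> nat \<Rightarrow> 'a"
    where "str' = (\<lambda>s' f. f (Inr s'))"
  define Y1 where "Y1 = (\<lambda>f. theta N W k x L lam gam npre npost pre' str' c th1 s f v l)"
  define Y2 where "Y2 = (\<lambda>f. bt k x npre npost pre' str' t f v l)"
  have m1: "Y1 \<in> borel_measurable (PiM J1 (\<lambda>_. PiM {..<N} Xs))"
    unfolding Y1_def
  proof (rule theta_meas[OF kmeas dict])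
    fix t' i assume "1 \<le> t'" "t' < s" "i < npre"
    then have "Inl (t', i) \<in> J1" unfolding J1_def by auto
    then show "pre' t' i \<in> PiM J1 (\<lambda>_. PiM {..<N} Xs) \<rightarrow>\<^sub>M PiM {..<N} Xs"
      unfolding pre'_def by (rule measurable_component_singleton)
  next
    fix s' assume "1 \<le> s'" "s' < s"
    then have "Inr s' \<in> J1" unfolding J1_def by auto
    then show "str' s' \<in> PiM J1 (\<lambda>_. PiM {..<N} Xs) \<rightarrow>\<^sub>M PiM {..<N} Xs"
      unfolding str'_def by (rule measurable_component_singleton)
  qed
  have m2: "Y2 \<in> borel_measurable (PiM J2 (\<lambda>_. PiM {..<N} Xs))"
    unfolding Y2_def
  proof (rule bt_meas[OF kmeas dict _ _ v l])
    fix i assume "i < npre"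
    then have "Inl (t, i) \<in> J2" unfolding J2_def by auto
    then show "pre' t i \<in> PiM J2 (\<lambda>_. PiM {..<N} Xs) \<rightarrow>\<^sub>M PiM {..<N} Xs"
      unfolding pre'_def by (rule measurable_component_singleton)
  next
    fix s' assume "max 1 (t - npost) \<le> s'" "s' \<le> t"
    then have "Inr s' \<in> J2" unfolding J2_def by auto
    then show "str' s' \<in> PiM J2 (\<lambda>_. PiM {..<N} Xs) \<rightarrow>\<^sub>M PiM {..<N} Xs"
      unfolding str'_def by (rule measurable_component_singleton)
  qed
  have c1: "Y1 \<circ> ?X1 = (\<lambda>\<omega>. th s \<omega> v l)"
  proof
    fix \<omega>
    have "th s \<omega> = theta N W k x L lam gam npre npost pre' str' c th1 s (?X1 \<omega>)"
    proof (rule theta_dep)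
      fix t' i assume "1 \<le> t'" "t' < s" "i < npre"
      then have "Inl (t', i) \<in> J1" unfolding J1_def by auto
      then show "ypre t' i \<omega> = pre' t' i (?X1 \<omega>)" unfolding pre'_def by (simp add: obs_family_def)
    next
      fix s' assume "1 \<le> s'" "s' < s"
      then have "Inr s' \<in> J1" unfolding J1_def by auto
      then show "ystr s' \<omega> = str' s' (?X1 \<omega>)" unfolding str'_def by (simp add: obs_family_def)
    qed
    then show "(Y1 \<circ> ?X1) \<omega> = th s \<omega> v l" unfolding Y1_def by simp
  qed
  have c2: "Y2 \<circ> ?X2 = (\<lambda>\<omega>. btt t \<omega> v l)"
  proof
    fix \<omega>
    have "btt t \<omega> = bt k x npre npost pre' str' t (?X2 \<omega>)"
    proof (rule bt_dep)
      fix i assume "i < npre"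
      then have "Inl (t, i) \<in> J2" unfolding J2_def by auto
      then show "ypre t i \<omega> = pre' t i (?X2 \<omega>)" unfolding pre'_def by (simp add: obs_family_def)
    next
      fix s' assume "max 1 (t - npost) \<le> s'" "s' \<le> t"
      then have "Inr s' \<in> J2" unfolding J2_def by auto
      then show "ystr s' \<omega> = str' s' (?X2 \<omega>)" unfolding str'_def by (simp add: obs_family_def)
    qed
    then show "(Y2 \<circ> ?X2) \<omega> = btt t \<omega> v l" unfolding Y2_def by simp
  qed
  have "indep_var borel (Y1 \<circ> ?X1) borel (Y2 \<circ> ?X2)"
    by (rule indep_var_compose[OF iv m1 m2])
  then have "indep_var borel (\<lambda>\<omega>. th s \<omega> v l) borel (\<lambda>\<omega>. btt t \<omega> v l)"
    unfolding c1 c2 .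
  then show ?thesis
    by (rule indep_var_lebesgue_integral[OF _ th_int[OF s v l] btt_int[OF t v l]])
qed

lemma Eip0:
  assumes s: "1 \<le> s" and st: "s + npost \<le> t"
  shows "(\<integral>\<omega>. ip N L (th s \<omega>) (btt t \<omega>) \<partial>\<M>) = 0"
proof -
  have t: "1 \<le> t" using s st by simp
  have "(\<integral>\<omega>. ip N L (th s \<omega>) (btt t \<omega>) \<partial>\<M>) = (\<Sum>v<N. \<integral>\<omega>. (\<Sum>l<L v. th s \<omega> v l * btt t \<omega> v l) \<partial>\<M>)"
    unfolding ip_def
    by (rule Bochner_Integration.integral_sum) (auto intro!: integrable_sum prod_int[OF s t])
  also have "\<dots> = (\<Sum>v<N. \<Sum>l<L v. \<integral>\<omega>. th s \<omega> v l * btt t \<omega> v l \<partial>\<M>)"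
    by (rule sum.cong[OF refl], rule Bochner_Integration.integral_sum) (auto intro!: prod_int[OF s t])
  also have "\<dots> = (\<Sum>v<N. \<Sum>l<L v. (\<integral>\<omega>. th s \<omega> v l \<partial>\<M>) * (\<integral>\<omega>. btt t \<omega> v l \<partial>\<M>))"
    by (intro sum.cong refl) (auto simp: indep_prod[OF s st])
  also have "\<dots> = 0" by (intro sum.neutral ballI) (auto simp: Ebt0[OF t])
  finally show ?thesis .
qed

end

declare theta.simps(2)[simp del]

context setting begin

lemma pt_full:
  assumes \<omega>: "\<omega> \<in> space \<M>" and bd: "\<forall>t. 1 \<le> t \<longrightarrow> thnorm N L (th t \<omega>) \<le> \<rho>"
    and t: "npost < t" and sdef: "s = t - npost"
  shows "ns N L (th (Suc t) \<omega>) \<le> (1 - 2 * (c / real t) * gam) * ns N L (th t \<omega>)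
           - 2 * (c / real t) * ip N L (th s \<omega>) (btt t \<omega>)
           + 2 * (c / real t) * (ltot N L * (real npost * (c / real s * Qc)) * KB) + (c / real t)\<^sup>2 * K1"
proof -
  have t1: "1 \<le> t" and s1: "1 \<le> s" and ts: "t = s + npost" using t sdef by auto
  define X where "X = real npost * (c / real s * Qc)"
  have split: "ip N L (th t \<omega>) (btt t \<omega>) = ip N L (th s \<omega>) (btt t \<omega>)
      + ip N L (\<lambda>v l. th t \<omega> v l - th s \<omega> v l) (btt t \<omega>)"
    unfolding ip_def by (simp add: left_diff_distrib sum_subtractf)
  have "\<bar>ip N L (\<lambda>v l. th t \<omega> v l - th s \<omega> v l) (btt t \<omega>)\<bar>
      \<le> (\<Sum>v<N. \<Sum>l<L v. \<bar>(th t \<omega> v l - th s \<omega> v l) * btt t \<omega> v l\<bar>)"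
    unfolding ip_def by (rule order_trans[OF sum_abs]) (intro sum_mono sum_abs)
  also have "\<dots> \<le> (\<Sum>v<N. \<Sum>l<L v. X * KB)"
  proof (intro sum_mono)
    fix v l assume v: "v \<in> {..<N}" and l: "l \<in> {..<L v}"
    have d: "\<bar>th t \<omega> v l - th s \<omega> v l\<bar> \<le> X"
      unfolding X_def ts using drift[OF \<omega> bd s1, of v l npost] v l by simp
    have b: "\<bar>btt t \<omega> v l\<bar> \<le> KB" using btt_bnd[OF \<omega> t1, of v l] v l by simp
    show "\<bar>(th t \<omega> v l - th s \<omega> v l) * btt t \<omega> v l\<bar> \<le> X * KB"
      unfolding abs_mult using d b by (intro mult_mono) auto
  qed
  also have "\<dots> = ltot N L * X * KB" by (simp only: sum_sum_const mult.assoc)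
  finally have bd2: "\<bar>ip N L (\<lambda>v l. th t \<omega> v l - th s \<omega> v l) (btt t \<omega>)\<bar> \<le> ltot N L * X * KB" .
  have a0: "0 \<le> c / real t" using c by simp
  have "- (2 * (c / real t) * ip N L (\<lambda>v l. th t \<omega> v l - th s \<omega> v l) (btt t \<omega>))
       \<le> 2 * (c / real t) * (ltot N L * X * KB)"
  proof -
    have "- ip N L (\<lambda>v l. th t \<omega> v l - th s \<omega> v l) (btt t \<omega>) \<le> ltot N L * X * KB"
      using bd2 by linarith
    then have "2 * (c / real t) * (- ip N L (\<lambda>v l. th t \<omega> v l - th s \<omega> v l) (btt t \<omega>))
        \<le> 2 * (c / real t) * (ltot N L * X * KB)" using a0 by (intro mult_left_mono) auto
    then show ?thesis by simp
  qed
  moreover have "ns N L (th (Suc t) \<omega>) \<le> (1 - 2 * (c / real t) * gam) * ns N L (th t \<omega>)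
           - 2 * (c / real t) * ip N L (th t \<omega>) (btt t \<omega>) + (c / real t)\<^sup>2 * K1"
    by (rule step_pt(2)[OF \<omega> bd t1])
  moreover have "2 * (c / real t) * ip N L (th t \<omega>) (btt t \<omega>) = 2 * (c / real t) * ip N L (th s \<omega>) (btt t \<omega>)
      + 2 * (c / real t) * ip N L (\<lambda>v l. th t \<omega> v l - th s \<omega> v l) (btt t \<omega>)"
    unfolding split by (simp only: distrib_left)
  ultimately show ?thesis unfolding X_def[symmetric] by linarith
qed

definition "ee t = (\<integral>\<omega>. ns N L (th t \<omega>) \<partial>\<M>)"
definition "Kc = 4 * c\<^sup>2 * (ltot N L * real npost * Qc * KB) + c\<^sup>2 * K1"

lemma ee_nonneg: "0 \<le> ee t" unfolding ee_def by (rule Bochner_Integration.integral_nonneg) (simp add: ns_nonneg)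

lemma Kc_nonneg: "0 \<le> Kc"
  unfolding Kc_def using ltot_nonneg Qc_nonneg KB_nonneg K1_nonneg by simp

lemma e_rec:
  assumes t: "2 * npost + 1 \<le> t"
  shows "ee (Suc t) \<le> (1 - 2 * c * gam / real t) * ee t + Kc / (real t)\<^sup>2"
proof -
  define s where "s = t - npost"
  have t1: "1 \<le> t" and s1: "1 \<le> s" and sn: "s + npost \<le> t" and tn: "npost < t"
    using t by (auto simp: s_def)
  define \<alpha> where "\<alpha> = c / real t"
  define D where "D = 2 * \<alpha> * (ltot N L * (real npost * (c / real s * Qc)) * KB) + \<alpha>\<^sup>2 * K1"
  have AE: "AE \<omega> in \<M>. ns N L (th (Suc t) \<omega>) \<le>
      (1 - 2 * \<alpha> * gam) * ns N L (th t \<omega>) - 2 * \<alpha> * ip N L (th s \<omega>) (btt t \<omega>) + D"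
    using AE_space bounded_all
  proof eventually_elim
    case (elim \<omega>)
    show ?case using pt_full[OF elim(1) elim(2) tn s_def] unfolding D_def \<alpha>_def by (simp add: algebra_simps)
  qed
  have "ee (Suc t) \<le> (\<integral>\<omega>. (1 - 2 * \<alpha> * gam) * ns N L (th t \<omega>) - 2 * \<alpha> * ip N L (th s \<omega>) (btt t \<omega>) + D \<partial>\<M>)"
    unfolding ee_def
    by (rule integral_mono_AE[OF ns_int _ AE]) (use ns_int[OF t1] ip_int[OF s1 t1] in auto)
  also have "\<dots> = (1 - 2 * \<alpha> * gam) * ee t - 2 * \<alpha> * (\<integral>\<omega>. ip N L (th s \<omega>) (btt t \<omega>) \<partial>\<M>) + D"
    unfolding ee_def using ns_int[OF t1] ip_int[OF s1 t1] by (simp add: prob_space)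
  also have "\<dots> = (1 - 2 * \<alpha> * gam) * ee t + D" using Eip0[OF s1 sn] by simp
  finally have r1: "ee (Suc t) \<le> (1 - 2 * \<alpha> * gam) * ee t + D" .
  have tpos: "0 < real t" using t1 by simp
  have spos: "0 < real s" using s1 by simp
  have ts2: "real t \<le> 2 * real s" using t unfolding s_def by simp
  have inv: "1 / real s \<le> 2 / real t" using tpos spos ts2 by (simp add: divide_simps)
  define Y where "Y = ltot N L * real npost * Qc * KB"
  have Y0: "0 \<le> Y" unfolding Y_def using ltot_nonneg Qc_nonneg KB_nonneg by simp
  have "2 * \<alpha> * (ltot N L * (real npost * (c / real s * Qc)) * KB) = (2 * c\<^sup>2 * Y / real t) * (1 / real s)"
    unfolding \<alpha>_def Y_def by (simp add: power2_eq_square)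
  also have "\<dots> \<le> (2 * c\<^sup>2 * Y / real t) * (2 / real t)"
    using inv Y0 tpos by (intro mult_left_mono) auto
  also have "\<dots> = 4 * c\<^sup>2 * Y / (real t)\<^sup>2" by (simp add: power2_eq_square)
  finally have "D \<le> 4 * c\<^sup>2 * Y / (real t)\<^sup>2 + c\<^sup>2 * K1 / (real t)\<^sup>2"
    unfolding D_def \<alpha>_def by (simp add: power_divide)
  also have "\<dots> = Kc / (real t)\<^sup>2" unfolding Kc_def Y_def by (simp add: add_divide_distrib)
  finally have "D \<le> Kc / (real t)\<^sup>2" .
  moreover have "2 * \<alpha> * gam = 2 * c * gam / real t" unfolding \<alpha>_def by simp
  ultimately show ?thesis using r1 by simp
qed

lemma ee_lim: "ee \<longlonglongrightarrow> 0"
proof (rule chung[of ee "2 * c * gam" Kc "2 * npost + 1"])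
  show "\<And>t. 0 \<le> ee t" by (rule ee_nonneg)
  show "0 < 2 * c * gam" using c gam by simp
  show "0 \<le> Kc" by (rule Kc_nonneg)
  fix t assume "2 * npost + 1 \<le> t"
  then show "ee (Suc t) \<le> (1 - 2 * c * gam / real t) * ee t + Kc / (real t)\<^sup>2" by (rule e_rec)
qed

lemma abs_le_eps: "0 < (\<epsilon>::real) \<Longrightarrow> \<bar>y\<bar> \<le> \<epsilon> + y\<^sup>2 / \<epsilon>"
proof -
  assume e: "0 < \<epsilon>"
  have "0 \<le> (\<bar>y\<bar> - \<epsilon>)\<^sup>2" by simp
  then have "0 \<le> \<bar>y\<bar> * \<bar>y\<bar> - 2 * \<epsilon> * \<bar>y\<bar> + \<epsilon> * \<epsilon>" by (simp add: power2_eq_square algebra_simps)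
  moreover have "\<bar>y\<bar> * \<bar>y\<bar> = y * y" by simp
  moreover have "0 \<le> \<epsilon> * \<bar>y\<bar>" using e by simp
  ultimately have "\<epsilon> * \<bar>y\<bar> \<le> \<epsilon> * \<epsilon> + y * y" by linarith
  then have "\<epsilon> * \<bar>y\<bar> \<le> \<epsilon> * (\<epsilon> + y\<^sup>2 / \<epsilon>)" using e by (simp add: distrib_left power2_eq_square)
  then show ?thesis using e by (simp add: mult_le_cancel_left_pos)
qed

abbreviation gh where "gh t \<omega> v \<equiv> ghat N W k x L lam gam npre npost ypre ystr c th1 t \<omega> v"

lemma ghat_bnd:
  assumes \<omega>: "\<omega> \<in> space \<M>" and t: "1 \<le> t" and v: "v < N" and e: "0 < \<epsilon>"
  shows "\<bar>gh t \<omega> v\<bar> \<le> K0 * (real (L v) * \<epsilon> + ns N L (th (Suc t) \<omega>) / \<epsilon>)"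
proof -
  let ?th = "th (Suc t) \<omega>"
  have sq: "(\<Sum>l<L v. (?th v l)\<^sup>2) \<le> ns N L ?th"
    unfolding ns_def using v by (intro member_le_sum[of v "{..<N}" "\<lambda>v. \<Sum>l<L v. (?th v l)\<^sup>2"]) (auto intro: sum_nonneg)
  have B0: "0 \<le> K0 * (real (L v) * \<epsilon> + ns N L ?th / \<epsilon>)"
    using K0_nonneg e ns_nonneg[of ?th] by simp
  show ?thesis unfolding ghat_def
  proof (rule avg_abs_bound[OF _ B0])
    fix y assume y: "y \<in> set (prewin npre ypre t \<omega>)"
    have ysp: "y \<in> space (PiM {..<N} Xs)" using y ypre_space[OF \<omega> t] unfolding prewin_def by auto
    have "\<bar>\<Sum>l<L v. feat k x v y l * ?th v l\<bar> \<le> (\<Sum>l<L v. \<bar>feat k x v y l * ?th v l\<bar>)" by (rule sum_abs)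
    also have "\<dots> \<le> (\<Sum>l<L v. K0 * (\<epsilon> + (?th v l)\<^sup>2 / \<epsilon>))"
    proof (rule sum_mono)
      fix l assume l: "l \<in> {..<L v}"
      show "\<bar>feat k x v y l * ?th v l\<bar> \<le> K0 * (\<epsilon> + (?th v l)\<^sup>2 / \<epsilon>)"
        unfolding abs_mult using feat_bnd[OF ysp v] l abs_le_eps[OF e, of "?th v l"]
        by (intro mult_mono) (auto intro: K0_nonneg)
    qed
    also have "\<dots> = K0 * (real (L v) * \<epsilon> + (\<Sum>l<L v. (?th v l)\<^sup>2) / \<epsilon>)"
      by (simp add: sum_distrib_left sum.distrib sum_divide_distrib distrib_left)
    also have "\<dots> \<le> K0 * (real (L v) * \<epsilon> + ns N L ?th / \<epsilon>)"
      using sq e K0_nonneg by (intro mult_left_mono add_left_mono divide_right_mono) auto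
    finally show "\<bar>\<Sum>l<L v. feat k x v y l * ?th v l\<bar> \<le> K0 * (real (L v) * \<epsilon> + ns N L ?th / \<epsilon>)" .
  qed
qed

lemma gh_meas:
  assumes t: "1 \<le> t" and v: "v < N"
  shows "(\<lambda>\<omega>. gh t \<omega> v) \<in> borel_measurable \<M>"
proof -
  have km: "(\<lambda>(a, b). k v a b) \<in> borel_measurable (Xs v \<Otimes>\<^sub>M Xs v)" using kmeas v by simp
  have f: "(\<lambda>\<omega>. feat k x v (ypre t i \<omega>) l) \<in> borel_measurable \<M>" if "i < npre" "l < L v" for i l
    using feat_meas[where k=k and x=x and v=v and l=l, OF ypre_meas[OF t that(1)] v _ km] dict v that(2) by simp
  show ?thesis unfolding ghat_def prewin_avg
    by (intro borel_measurable_divide borel_measurable_sum borel_measurable_times borel_measurable_const th_meas f) auto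
qed

lemma gh_int:
  assumes t: "1 \<le> t" and v: "v < N"
  shows "integrable \<M> (\<lambda>\<omega>. gh t \<omega> v)"
proof (rule integrable_const_bound[where B="K0 * (real (L v) + \<rho>\<^sup>2)"])
  show "AE \<omega> in \<M>. norm (gh t \<omega> v) \<le> K0 * (real (L v) + \<rho>\<^sup>2)"
    using AE_space bounded_all
  proof eventually_elim
    case (elim \<omega>)
    have "thnorm N L (th (Suc t) \<omega>) \<le> \<rho>" using elim(2)[rule_format, of "Suc t"] by simp
    then have "ns N L (th (Suc t) \<omega>) \<le> \<rho>\<^sup>2" by (rule thnorm_coords(2))
    then have "K0 * (real (L v) * 1 + ns N L (th (Suc t) \<omega>) / 1) \<le> K0 * (real (L v) + \<rho>\<^sup>2)"
      using K0_nonneg by (intro mult_left_mono) auto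
    then show ?case using ghat_bnd[OF elim(1) t v, of 1] by simp
  qed
  show "(\<lambda>\<omega>. gh t \<omega> v) \<in> borel_measurable \<M>" by (rule gh_meas[OF t v])
qed

lemma ghat_lim: "\<forall>v<N. (\<lambda>t. integral\<^sup>L \<M> (\<lambda>\<omega>. gh t \<omega> v)) \<longlonglongrightarrow> 0"
proof (intro allI impI)
  fix v assume v: "v < N"
  show "(\<lambda>t. integral\<^sup>L \<M> (\<lambda>\<omega>. gh t \<omega> v)) \<longlonglongrightarrow> 0"
  proof (rule LIMSEQ_I)
    fix r :: real assume r: "0 < r"
    define B where "B = K0 * real (L v) + 1"
    have B: "0 < B" unfolding B_def using K0_nonneg by (simp add: add_nonneg_pos)
    define \<epsilon> where "\<epsilon> = r / (2 * B)"
    have e: "0 < \<epsilon>" unfolding \<epsilon>_def using r B by simp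
    define \<delta> where "\<delta> = \<epsilon> * r / (2 * (K0 + 1))"
    have d: "0 < \<delta>" unfolding \<delta>_def using e r K0_nonneg by simp
    obtain T where T: "\<And>n. T \<le> n \<Longrightarrow> norm (ee n - 0) < \<delta>"
      using LIMSEQ_D[OF ee_lim d] by blast
    show "\<exists>no. \<forall>n\<ge>no. norm (integral\<^sup>L \<M> (\<lambda>\<omega>. gh n \<omega> v) - 0) < r"
    proof (intro exI allI impI)
      fix t assume tT: "max T 1 \<le> t"
      then have t: "1 \<le> t" and T': "T \<le> Suc t" by auto
      have eb: "ee (Suc t) < \<delta>" using T[OF T'] ee_nonneg[of "Suc t"] by simp
      have "\<bar>integral\<^sup>L \<M> (\<lambda>\<omega>. gh t \<omega> v)\<bar>
          \<le> (\<integral>\<omega>. K0 * (real (L v) * \<epsilon> + ns N L (th (Suc t) \<omega>) / \<epsilon>) \<partial>\<M>)"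
      proof (rule order_trans[OF integral_abs_bound])
        show "(\<integral>\<omega>. \<bar>gh t \<omega> v\<bar> \<partial>\<M>) \<le> (\<integral>\<omega>. K0 * (real (L v) * \<epsilon> + ns N L (th (Suc t) \<omega>) / \<epsilon>) \<partial>\<M>)"
          by (rule Bochner_Integration.integral_mono) (use gh_int[OF t v] ns_int[of "Suc t"] ghat_bnd[OF _ t v e] in auto)
      qed
      also have "\<dots> = K0 * (real (L v) * \<epsilon>) + K0 * (ee (Suc t) / \<epsilon>)"
        unfolding ee_def using ns_int[of "Suc t"] by (simp add: prob_space distrib_left)
      also have "\<dots> < r"
      proof -
        have "K0 * (real (L v) * \<epsilon>) = (B - 1) * \<epsilon>" unfolding B_def by simp
        also have "\<dots> < B * \<epsilon>" using e by simp
        also have "B * \<epsilon> = r / 2" unfolding \<epsilon>_def using B by simp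
        finally have 1: "K0 * (real (L v) * \<epsilon>) < r / 2" .
        have "ee (Suc t) / \<epsilon> \<le> \<delta> / \<epsilon>" using eb e by (intro divide_right_mono) auto
        also have "\<dots> = r / (2 * (K0 + 1))" unfolding \<delta>_def using e by simp
        finally have "K0 * (ee (Suc t) / \<epsilon>) \<le> K0 * (r / (2 * (K0 + 1)))"
          using K0_nonneg by (intro mult_left_mono) auto
        also have "\<dots> \<le> r / 2"
          using K0_nonneg r by (simp add: field_simps)
        finally have 2: "K0 * (ee (Suc t) / \<epsilon>) \<le> r / 2" .
        show ?thesis using 1 2 by linarith
      qed
      finally show "norm (integral\<^sup>L \<M> (\<lambda>\<omega>. gh t \<omega> v) - 0) < r" by simp
    qed
  qed
qed

end

theorem corollary1:
  fixes \<M> :: "'m measure"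
    and N :: nat and W :: "nat \<Rightarrow> nat \<Rightarrow> real"
    and Xs :: "nat \<Rightarrow> 'a measure" and P :: "(nat \<Rightarrow> 'a) measure"
    and k :: "nat \<Rightarrow> 'a \<Rightarrow> 'a \<Rightarrow> real" and Mb :: "nat \<Rightarrow> real"
    and x :: "nat \<Rightarrow> nat \<Rightarrow> 'a" and L :: "nat \<Rightarrow> nat"
    and lam gam c \<rho> :: real and npre npost :: nat
    and ypre :: "nat \<Rightarrow> nat \<Rightarrow> 'm \<Rightarrow> (nat \<Rightarrow> 'a)"
    and ystr :: "nat \<Rightarrow> 'm \<Rightarrow> (nat \<Rightarrow> 'a)"
    and th1 :: "nat \<Rightarrow> nat \<Rightarrow> real" and \<sigma>t :: "nat \<Rightarrow> real"
  assumes M: "prob_space \<M>"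
    and N: "0 < N"
    and W_nonneg: "\<forall>u<N. \<forall>v<N. 0 \<le> W u v"
    and W_sym: "\<forall>u<N. \<forall>v<N. W u v = W v u"
    and W_diag: "\<forall>v<N. W v v = 0"
    \<comment> \<open>Assumption 1\<close>
    and kern: "\<forall>v<N. reproducing_kernel (space (Xs v)) (k v)"
    and sep: "\<forall>v<N. rkhs_separable (space (Xs v)) (k v)"
    and bnd: "\<forall>v<N. \<forall>a\<in>space (Xs v). \<forall>b\<in>space (Xs v). k v a b \<le> Mb v"
    and kmeas: "\<forall>v<N. (\<lambda>(a, b). k v a b) \<in> borel_measurable (Xs v \<Otimes>\<^sub>M Xs v)"
    and dict: "\<forall>v<N. \<forall>l<L v. x v l \<in> space (Xs v)"
    \<comment> \<open>data under the null p = p': all observations i.i.d. with law P; in particular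
        Assumption 2 (independence in time)\<close>
    and indep: "prob_space.indep_vars \<M> (\<lambda>_. PiM {..<N} Xs) (obs_family ypre ystr) (obs_index npre)"
    and distr: "\<forall>j\<in>obs_index npre. distr \<M> (PiM {..<N} Xs) (obs_family ypre ystr j) = P"
    and npre: "0 < npre"
    and lam: "0 \<le> lam" and gam: "0 < gam"
    and c: "0 < c" and cC: "c * Cmax N W P k x L Mb lam gam < 1"
    and rho: "0 < \<rho>"
    and bounded: "\<forall>t\<ge>1. AE \<omega> in \<M>.
                    thnorm N L (theta N W k x L lam gam npre npost ypre ystr c th1 t \<omega>) \<le> \<rho>"
    and sigma: "\<forall>t\<ge>1. \<forall>v<N.
                  integral\<^sup>L \<M> (delta_sq \<M> N W k x L lam gam npre npost ypre ystr c th1 t v) \<le> (\<sigma>t t)\<^sup>2"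
    and sigma_fin: "bdd_above (\<sigma>t ` {1..})"
  shows "\<forall>v<N. (\<lambda>t. integral\<^sup>L \<M> (\<lambda>\<omega>. ghat N W k x L lam gam npre npost ypre ystr c th1 t \<omega> v))
                  \<longlonglongrightarrow> 0"
proof -
  have S: "setting \<M> N W Xs P k Mb x L lam gam c \<rho> npre npost ypre ystr th1 \<sigma>t"
    by (rule setting.intro) (fact assms)+
  show ?thesis by (rule setting.ghat_lim[OF S])
qed

end
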